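(* In the binary relay channel described in the context, fix any relay encoding scheme, i.e. any mapping producing $X_1^n$ from $Y_1^n$ (so that $Z^n - Y_1^n - X_1^n - S^n$ is a Markov chain), and let $S^n$ be the output of the memoryless binary symmetric channel $S_i=X_{1i}\oplus N_i$. Let $R_0=\max_{p(x_1)}I(X_1;S)=1-h(\epsilon)$. Then $$H(Z^n\mid S^n)\ \ge\ n\min_{p(u\mid y_1):\ I(U;Y_1)\le R_0} H(Z\mid U),$$ where in the minimization $(Z,Y_1,U)$ has joint law $p(z)p(y_1\mid z)p(u\mid y_1)$ with $Z\sim\mathrm{Ber}(p)$, $Y_1=Z\oplus V$, $V\sim\mathrm{Ber}(\delta)$ independent of $Z$; the minimization may be restricted to $U$ with $|\mathcal U|\le|\mathcal Y_1|+2$.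
   Context: Binary relay channel: all alphabets are $\{0,1\}$ and $\oplus$ denotes addition mod 2. Let $Z_i$, $V_i$, $N_i$ ($i=1,2,\dots$) be mutually independent i.i.d. sequences with $Z_i\sim\mathrm{Ber}(p)$, $V_i\sim\mathrm{Ber}(\delta)$, $N_i\sim\mathrm{Ber}(\epsilon)$. The relay observes $Y_{1i}=Z_i\oplus V_i$, sends $X_{1i}$, and the destination receives $S_i=X_{1i}\oplus N_i$. Entropies are in bits; $h(q)=-q\log_2q-(1-q)\log_2(1-q)$. *)

theory Defs
  imports Complex_Main
begin

definition bin_ent :: "real \<Rightarrow> real" where
  "bin_ent q = - (if q = 0 then 0 else q * log 2 q)
               - (if 1 - q = 0 then 0 else (1 - q) * log 2 (1 - q))"

definition xlogxy :: "real \<Rightarrow> real \<Rightarrow> real" where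
  "xlogxy a b = (if a = 0 then 0 else a * log 2 (a / b))"

definition ber :: "real \<Rightarrow> bool \<Rightarrow> real" where
  "ber q b = (if b then q else 1 - q)"

definition bxor :: "bool \<Rightarrow> bool \<Rightarrow> bool" where
  "bxor a b = (a \<noteq> b)"

definition seqs :: "nat \<Rightarrow> bool list set" where
  "seqs n = {xs. length xs = n}"

text \<open>A relay encoding scheme: a (possibly randomized) map from Y1^n to X1^n,
  given as a stochastic kernel K y x = P(X1^n = x | Y1^n = y).\<close>
definition relay_kernel :: "nat \<Rightarrow> (bool list \<Rightarrow> bool list \<Rightarrow> real) \<Rightarrow> bool" where
  "relay_kernel n K \<longleftrightarrow>
     (\<forall>y x. 0 \<le> K y x) \<and> (\<forall>y \<in> seqs n. (\<Sum>x\<in>seqs n. K y x) = 1)"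

definition joint :: "real \<Rightarrow> real \<Rightarrow> real \<Rightarrow> nat \<Rightarrow> (bool list \<Rightarrow> bool list \<Rightarrow> real)
    \<Rightarrow> bool list \<Rightarrow> bool list \<Rightarrow> bool list \<Rightarrow> bool list \<Rightarrow> real" where
  "joint p \<delta> \<epsilon> n K z y x s =
     (\<Prod>i<n. ber p (z ! i) * ber \<delta> (bxor (y ! i) (z ! i))) * K y x
     * (\<Prod>i<n. ber \<epsilon> (bxor (s ! i) (x ! i)))"

definition pZS :: "real \<Rightarrow> real \<Rightarrow> real \<Rightarrow> nat \<Rightarrow> (bool list \<Rightarrow> bool list \<Rightarrow> real)
    \<Rightarrow> bool list \<Rightarrow> bool list \<Rightarrow> real" where
  "pZS p \<delta> \<epsilon> n K z s = (\<Sum>y\<in>seqs n. \<Sum>x\<in>seqs n. joint p \<delta> \<epsilon> n K z y x s)"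

definition pS :: "real \<Rightarrow> real \<Rightarrow> real \<Rightarrow> nat \<Rightarrow> (bool list \<Rightarrow> bool list \<Rightarrow> real)
    \<Rightarrow> bool list \<Rightarrow> real" where
  "pS p \<delta> \<epsilon> n K s = (\<Sum>z\<in>seqs n. pZS p \<delta> \<epsilon> n K z s)"

definition H_Zn_Sn :: "real \<Rightarrow> real \<Rightarrow> real \<Rightarrow> nat \<Rightarrow> (bool list \<Rightarrow> bool list \<Rightarrow> real) \<Rightarrow> real" where
  "H_Zn_Sn p \<delta> \<epsilon> n K =
     - (\<Sum>z\<in>seqs n. \<Sum>s\<in>seqs n. xlogxy (pZS p \<delta> \<epsilon> n K z s) (pS p \<delta> \<epsilon> n K s))"

definition test_channel :: "nat \<Rightarrow> (bool \<Rightarrow> nat \<Rightarrow> real) \<Rightarrow> bool" where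
  "test_channel m q \<longleftrightarrow> (\<forall>y u. 0 \<le> q y u) \<and> (\<forall>y. (\<Sum>u<m. q y u) = 1)"

definition pZYU :: "real \<Rightarrow> real \<Rightarrow> (bool \<Rightarrow> nat \<Rightarrow> real) \<Rightarrow> bool \<Rightarrow> bool \<Rightarrow> nat \<Rightarrow> real" where
  "pZYU p \<delta> q z y u = ber p z * ber \<delta> (bxor y z) * q y u"

definition pY1 :: "real \<Rightarrow> real \<Rightarrow> bool \<Rightarrow> real" where
  "pY1 p \<delta> y = (\<Sum>z\<in>UNIV. ber p z * ber \<delta> (bxor y z))"

definition pU :: "real \<Rightarrow> real \<Rightarrow> (bool \<Rightarrow> nat \<Rightarrow> real) \<Rightarrow> nat \<Rightarrow> real" where
  "pU p \<delta> q u = (\<Sum>z\<in>UNIV. \<Sum>y\<in>UNIV. pZYU p \<delta> q z y u)"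

definition pZU :: "real \<Rightarrow> real \<Rightarrow> (bool \<Rightarrow> nat \<Rightarrow> real) \<Rightarrow> bool \<Rightarrow> nat \<Rightarrow> real" where
  "pZU p \<delta> q z u = (\<Sum>y\<in>UNIV. pZYU p \<delta> q z y u)"

definition pYU :: "real \<Rightarrow> real \<Rightarrow> (bool \<Rightarrow> nat \<Rightarrow> real) \<Rightarrow> bool \<Rightarrow> nat \<Rightarrow> real" where
  "pYU p \<delta> q y u = (\<Sum>z\<in>UNIV. pZYU p \<delta> q z y u)"

definition I_UY :: "real \<Rightarrow> real \<Rightarrow> nat \<Rightarrow> (bool \<Rightarrow> nat \<Rightarrow> real) \<Rightarrow> real" where
  "I_UY p \<delta> m q =
     (\<Sum>y\<in>UNIV. \<Sum>u<m. xlogxy (pYU p \<delta> q y u) (pY1 p \<delta> y * pU p \<delta> q u))"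

definition H_ZU :: "real \<Rightarrow> real \<Rightarrow> nat \<Rightarrow> (bool \<Rightarrow> nat \<Rightarrow> real) \<Rightarrow> real" where
  "H_ZU p \<delta> m q = - (\<Sum>z\<in>UNIV. \<Sum>u<m. xlogxy (pZU p \<delta> q z u) (pU p \<delta> q u))"

end

theory Submission
  imports Defs "HOL-Analysis.Analysis" "HOL-Real_Asymp.Real_Asymp"
begin

lemma sum_UNIV_prod: "(\<Sum>m\<in>(UNIV :: (bool \<times> bool) set). f m) = (\<Sum>a\<in>UNIV. \<Sum>b\<in>UNIV. f (a, b))"
  by (simp add: sum.cartesian_product UNIV_Times_UNIV[symmetric] del: UNIV_Times_UNIV)


definition mass :: "'a set \<Rightarrow> ('a \<Rightarrow> real) \<Rightarrow> ('a \<Rightarrow> 'b) \<Rightarrow> 'b \<Rightarrow> real" where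
  "mass \<Omega> P f v = (\<Sum>\<omega>\<in>\<Omega>. if f \<omega> = v then P \<omega> else 0)"

definition ent :: "'a set \<Rightarrow> ('a \<Rightarrow> real) \<Rightarrow> ('a \<Rightarrow> 'b) \<Rightarrow> real" where
  "ent \<Omega> P f = - (\<Sum>\<omega>\<in>\<Omega>. P \<omega> * log 2 (mass \<Omega> P f (f \<omega>)))"

definition pmf_on :: "'a set \<Rightarrow> ('a \<Rightarrow> real) \<Rightarrow> bool" where
  "pmf_on \<Omega> P \<longleftrightarrow> finite \<Omega> \<and> (\<forall>\<omega>\<in>\<Omega>. 0 \<le> P \<omega>) \<and> sum P \<Omega> = 1"

lemma mass_nonneg: "pmf_on \<Omega> P \<Longrightarrow> 0 \<le> mass \<Omega> P f v"
  unfolding mass_def pmf_on_def by (auto intro!: sum_nonneg)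

lemma mass_ge: assumes "pmf_on \<Omega> P" "\<omega> \<in> \<Omega>" shows "P \<omega> \<le> mass \<Omega> P f (f \<omega>)"
proof -
  have "P \<omega> = (\<Sum>x\<in>{\<omega>}. if f x = f \<omega> then P x else 0)" by simp
  also have "\<dots> \<le> mass \<Omega> P f (f \<omega>)" unfolding mass_def
    using assms by (intro sum_mono2) (auto simp: pmf_on_def)
  finally show ?thesis .
qed

lemma push:
  assumes "pmf_on \<Omega> P" "finite V" "f ` \<Omega> \<subseteq> V"
  shows "(\<Sum>\<omega>\<in>\<Omega>. P \<omega> * F (f \<omega>)) = (\<Sum>v\<in>V. mass \<Omega> P f v * F v)"
proof -
  have "(\<Sum>v\<in>V. mass \<Omega> P f v * F v) = (\<Sum>v\<in>V. \<Sum>\<omega>\<in>\<Omega>. if f \<omega> = v then P \<omega> * F (f \<omega>) else 0)"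
    unfolding mass_def sum_distrib_right by (intro sum.cong) auto
  also have "\<dots> = (\<Sum>\<omega>\<in>\<Omega>. \<Sum>v\<in>V. if f \<omega> = v then P \<omega> * F (f \<omega>) else 0)"
    by (rule sum.swap)
  also have "\<dots> = (\<Sum>\<omega>\<in>\<Omega>. P \<omega> * F (f \<omega>))"
    using assms by (intro sum.cong) (auto simp: sum.delta)
  finally show ?thesis by simp
qed

lemma mass_sum: assumes "pmf_on \<Omega> P" "finite V" "f ` \<Omega> \<subseteq> V"
  shows "(\<Sum>v\<in>V. mass \<Omega> P f v) = 1"
  using push[OF assms, of "\<lambda>_. 1"] assms(1) by (simp add: pmf_on_def)

lemma mass_out: "v \<notin> f ` \<Omega> \<Longrightarrow> mass \<Omega> P f v = 0"
  unfolding mass_def by (intro sum.neutral) auto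

lemma mass_le1: assumes "pmf_on \<Omega> P" shows "mass \<Omega> P f v \<le> 1"
proof -
  have "mass \<Omega> P f v \<le> sum P \<Omega>" unfolding mass_def using assms
    by (intro sum_mono) (auto simp: pmf_on_def)
  thus ?thesis using assms by (simp add: pmf_on_def)
qed

lemma ent_push: assumes "pmf_on \<Omega> P" "finite V" "f ` \<Omega> \<subseteq> V"
  shows "ent \<Omega> P f = - (\<Sum>v\<in>V. mass \<Omega> P f v * log 2 (mass \<Omega> P f v))"
  unfolding ent_def using push[OF assms, of "\<lambda>v. log 2 (mass \<Omega> P f v)"] by simp

lemma mass_marg: assumes "pmf_on \<Omega> P" "finite B" "g ` \<Omega> \<subseteq> B"
  shows "mass \<Omega> P f v = (\<Sum>b\<in>B. mass \<Omega> P (\<lambda>\<omega>. (f \<omega>, g \<omega>)) (v, b))"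
proof -
  have "(\<Sum>b\<in>B. mass \<Omega> P (\<lambda>\<omega>. (f \<omega>, g \<omega>)) (v, b)) =
        (\<Sum>\<omega>\<in>\<Omega>. \<Sum>b\<in>B. if (f \<omega>, g \<omega>) = (v, b) then P \<omega> else 0)"
    unfolding mass_def by (rule sum.swap)
  also have "\<dots> = mass \<Omega> P f v" unfolding mass_def
    using assms by (intro sum.cong) (auto simp: sum.delta)
  finally show ?thesis by simp
qed

lemma ent_relabel:
  assumes "\<And>\<omega> \<omega>'. \<omega> \<in> \<Omega> \<Longrightarrow> \<omega>' \<in> \<Omega> \<Longrightarrow> f \<omega> = f \<omega>' \<longleftrightarrow> g \<omega> = g \<omega>'"
  shows "ent \<Omega> P f = ent \<Omega> P g"
  unfolding ent_def mass_def using assms by (intro arg_cong[where f=uminus] sum.cong refl) (auto intro!: sum.cong)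

lemma mass_pos: assumes "pmf_on \<Omega> P" "\<omega> \<in> \<Omega>" "0 < P \<omega>" shows "0 < mass \<Omega> P f (f \<omega>)"
  using mass_ge[OF assms(1,2), of f] assms(3) by linarith

lemma gibbs:
  assumes "finite \<Omega>" "\<And>\<omega>. \<omega> \<in> \<Omega> \<Longrightarrow> 0 \<le> P \<omega>"
    and "\<And>\<omega>. \<omega> \<in> \<Omega> \<Longrightarrow> 0 < P \<omega> \<Longrightarrow> 0 < A \<omega> \<and> 0 < B \<omega>"
    and "(\<Sum>\<omega>\<in>\<Omega>. P \<omega> * (B \<omega> / A \<omega>)) \<le> sum P \<Omega>"
  shows "0 \<le> (\<Sum>\<omega>\<in>\<Omega>. P \<omega> * log 2 (A \<omega> / B \<omega>))"
proof -
  have le: "P \<omega> * (1 - B \<omega> / A \<omega>) / ln 2 \<le> P \<omega> * log 2 (A \<omega> / B \<omega>)" if "\<omega> \<in> \<Omega>" for \<omega>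
  proof (cases "P \<omega> = 0")
    case False
    then have P: "0 < P \<omega>" using assms(2) that by force
    with assms(3) that have AB: "0 < A \<omega>" "0 < B \<omega>" by auto
    have "ln (B \<omega> / A \<omega>) \<le> B \<omega> / A \<omega> - 1" using AB by (intro ln_le_minus_one) simp
    moreover have "ln (A \<omega> / B \<omega>) = - ln (B \<omega> / A \<omega>)" using AB by (simp add: ln_div)
    ultimately have "1 - B \<omega> / A \<omega> \<le> ln (A \<omega> / B \<omega>)" by simp
    hence "(1 - B \<omega> / A \<omega>) / ln 2 \<le> log 2 (A \<omega> / B \<omega>)"
      unfolding log_def by (simp add: divide_right_mono)
    hence "P \<omega> * ((1 - B \<omega> / A \<omega>) / ln 2) \<le> P \<omega> * log 2 (A \<omega> / B \<omega>)"
      using P by (intro mult_left_mono) auto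
    thus ?thesis by simp
  qed simp
  have "0 \<le> (\<Sum>\<omega>\<in>\<Omega>. P \<omega> * (1 - B \<omega> / A \<omega>) / ln 2)"
  proof -
    have "(\<Sum>\<omega>\<in>\<Omega>. P \<omega> * (1 - B \<omega> / A \<omega>) / ln 2) = (sum P \<Omega> - (\<Sum>\<omega>\<in>\<Omega>. P \<omega> * (B \<omega> / A \<omega>))) / ln 2"
      by (simp add: sum_divide_distrib[symmetric] right_diff_distrib sum_subtractf)
    thus ?thesis using assms(4) by simp
  qed
  also have "\<dots> \<le> (\<Sum>\<omega>\<in>\<Omega>. P \<omega> * log 2 (A \<omega> / B \<omega>))" using le by (rule sum_mono)
  finally show ?thesis .
qed

lemma mass_marg_mid: assumes "pmf_on \<Omega> P" "finite B" "g ` \<Omega> \<subseteq> B"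
  shows "mass \<Omega> P (\<lambda>\<omega>. (f \<omega>, k \<omega>)) (a, c) = (\<Sum>b\<in>B. mass \<Omega> P (\<lambda>\<omega>. (f \<omega>, g \<omega>, k \<omega>)) (a, b, c))"
proof -
  have pw: "(\<Sum>b\<in>B. if (f \<omega>, g \<omega>, k \<omega>) = (a, b, c) then P \<omega> else 0) =
          (if (f \<omega>, k \<omega>) = (a, c) then P \<omega> else 0)" if w: "\<omega> \<in> \<Omega>" for \<omega>
  proof -
    have "(\<Sum>b\<in>B. if (f \<omega>, g \<omega>, k \<omega>) = (a, b, c) then P \<omega> else 0) =
          (\<Sum>b\<in>B. if b = g \<omega> then (if (f \<omega>, k \<omega>) = (a, c) then P \<omega> else 0) else 0)"
      by (rule sum.cong[OF refl]) (cases "b = g \<omega>", auto)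
    also have "\<dots> = (if (f \<omega>, k \<omega>) = (a, c) then P \<omega> else 0)"
      apply (subst sum.delta) using assms w by auto
    finally show ?thesis .
  qed
  show ?thesis unfolding mass_def
    by (subst sum.swap) (rule sum.cong[OF refl, symmetric], rule pw)
qed

lemma mass_marg_fst: assumes "pmf_on \<Omega> P" "finite B" "g ` \<Omega> \<subseteq> B"
  shows "mass \<Omega> P k c = (\<Sum>b\<in>B. mass \<Omega> P (\<lambda>\<omega>. (g \<omega>, k \<omega>)) (b, c))"
proof -
  have pw: "(\<Sum>b\<in>B. if (g \<omega>, k \<omega>) = (b, c) then P \<omega> else 0) =
          (if k \<omega> = c then P \<omega> else 0)" if w: "\<omega> \<in> \<Omega>" for \<omega>
  proof -
    have "(\<Sum>b\<in>B. if (g \<omega>, k \<omega>) = (b, c) then P \<omega> else 0) =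
          (\<Sum>b\<in>B. if b = g \<omega> then (if k \<omega> = c then P \<omega> else 0) else 0)"
      by (rule sum.cong[OF refl]) (cases "b = g \<omega>", auto)
    also have "\<dots> = (if k \<omega> = c then P \<omega> else 0)"
      apply (subst sum.delta) using assms w by auto
    finally show ?thesis .
  qed
  show ?thesis unfolding mass_def
    by (subst sum.swap) (rule sum.cong[OF refl, symmetric], rule pw)
qed

lemma log_mult_pos: "0 < x \<Longrightarrow> 0 < y \<Longrightarrow> log 2 (x * y) = log 2 x + log 2 y"
  by (simp add: log_mult)

lemma markov_eq:
  assumes pm: "pmf_on \<Omega> P"
    and fac: "\<And>\<omega>. \<omega> \<in> \<Omega> \<Longrightarrow>
       mass \<Omega> P (\<lambda>\<omega>. (f \<omega>, g \<omega>, k \<omega>)) (f \<omega>, g \<omega>, k \<omega>) * mass \<Omega> P k (k \<omega>) =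
       mass \<Omega> P (\<lambda>\<omega>. (f \<omega>, k \<omega>)) (f \<omega>, k \<omega>) * mass \<Omega> P (\<lambda>\<omega>. (g \<omega>, k \<omega>)) (g \<omega>, k \<omega>)"
  shows "ent \<Omega> P (\<lambda>\<omega>. (f \<omega>, g \<omega>, k \<omega>)) + ent \<Omega> P k =
         ent \<Omega> P (\<lambda>\<omega>. (f \<omega>, k \<omega>)) + ent \<Omega> P (\<lambda>\<omega>. (g \<omega>, k \<omega>))"
proof -
  have "P \<omega> * log 2 (mass \<Omega> P (\<lambda>\<omega>. (f \<omega>, g \<omega>, k \<omega>)) (f \<omega>, g \<omega>, k \<omega>)) + P \<omega> * log 2 (mass \<Omega> P k (k \<omega>)) =
        P \<omega> * log 2 (mass \<Omega> P (\<lambda>\<omega>. (f \<omega>, k \<omega>)) (f \<omega>, k \<omega>)) + P \<omega> * log 2 (mass \<Omega> P (\<lambda>\<omega>. (g \<omega>, k \<omega>)) (g \<omega>, k \<omega>))"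
    if w: "\<omega> \<in> \<Omega>" for \<omega>
  proof (cases "P \<omega> = 0")
    case False
    hence Pp: "0 < P \<omega>" using pm w unfolding pmf_on_def by force
    note mp = mass_pos[OF pm w Pp]
    define A where "A = mass \<Omega> P (\<lambda>\<omega>. (f \<omega>, g \<omega>, k \<omega>)) (f \<omega>, g \<omega>, k \<omega>)"
    define K where "K = mass \<Omega> P k (k \<omega>)"
    define B where "B = mass \<Omega> P (\<lambda>\<omega>. (f \<omega>, k \<omega>)) (f \<omega>, k \<omega>)"
    define C where "C = mass \<Omega> P (\<lambda>\<omega>. (g \<omega>, k \<omega>)) (g \<omega>, k \<omega>)"
    have pos: "0 < A" "0 < K" "0 < B" "0 < C" unfolding A_def K_def B_def C_def
      using mp[of "\<lambda>\<omega>. (f \<omega>, g \<omega>, k \<omega>)"] mp[of k] mp[of "\<lambda>\<omega>. (f \<omega>, k \<omega>)"] mp[of "\<lambda>\<omega>. (g \<omega>, k \<omega>)"]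
      by auto
    have e: "A * K = B * C" unfolding A_def K_def B_def C_def by (rule fac[OF w])
    have l0: "log 2 (A * K) = log 2 (B * C)" using e by simp
    have "log 2 A + log 2 K = log 2 B + log 2 C"
      using log_mult_pos[OF pos(1,2)] log_mult_pos[OF pos(3,4)] l0 by linarith
    hence "P \<omega> * (log 2 A + log 2 K) = P \<omega> * (log 2 B + log 2 C)" by simp
    thus ?thesis unfolding A_def K_def B_def C_def distrib_left .
  qed simp
  hence "(\<Sum>\<omega>\<in>\<Omega>. P \<omega> * log 2 (mass \<Omega> P (\<lambda>\<omega>. (f \<omega>, g \<omega>, k \<omega>)) (f \<omega>, g \<omega>, k \<omega>)) + P \<omega> * log 2 (mass \<Omega> P k (k \<omega>))) =
         (\<Sum>\<omega>\<in>\<Omega>. P \<omega> * log 2 (mass \<Omega> P (\<lambda>\<omega>. (f \<omega>, k \<omega>)) (f \<omega>, k \<omega>)) + P \<omega> * log 2 (mass \<Omega> P (\<lambda>\<omega>. (g \<omega>, k \<omega>)) (g \<omega>, k \<omega>)))"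
    by (rule sum.cong[OF refl])
  hence "(\<Sum>\<omega>\<in>\<Omega>. P \<omega> * log 2 (mass \<Omega> P (\<lambda>\<omega>. (f \<omega>, g \<omega>, k \<omega>)) (f \<omega>, g \<omega>, k \<omega>))) + (\<Sum>\<omega>\<in>\<Omega>. P \<omega> * log 2 (mass \<Omega> P k (k \<omega>))) =
         (\<Sum>\<omega>\<in>\<Omega>. P \<omega> * log 2 (mass \<Omega> P (\<lambda>\<omega>. (f \<omega>, k \<omega>)) (f \<omega>, k \<omega>))) + (\<Sum>\<omega>\<in>\<Omega>. P \<omega> * log 2 (mass \<Omega> P (\<lambda>\<omega>. (g \<omega>, k \<omega>)) (g \<omega>, k \<omega>)))"
    unfolding sum.distrib .
  thus ?thesis unfolding ent_def by linarith
qed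

lemma markov_prod:
  assumes pm: "pmf_on \<Omega> P" and fin: "finite FV" "finite GV" "finite KV"
    and im: "f ` \<Omega> \<subseteq> FV" "g ` \<Omega> \<subseteq> GV" "k ` \<Omega> \<subseteq> KV"
    and fac: "\<And>a b c. a \<in> FV \<Longrightarrow> b \<in> GV \<Longrightarrow> c \<in> KV \<Longrightarrow>
       mass \<Omega> P (\<lambda>\<omega>. (f \<omega>, g \<omega>, k \<omega>)) (a, b, c) = \<alpha> a c * \<beta> b c"
  shows "ent \<Omega> P (\<lambda>\<omega>. (f \<omega>, g \<omega>, k \<omega>)) + ent \<Omega> P k =
         ent \<Omega> P (\<lambda>\<omega>. (f \<omega>, k \<omega>)) + ent \<Omega> P (\<lambda>\<omega>. (g \<omega>, k \<omega>))"
proof (rule markov_eq[OF pm])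
  fix \<omega> assume w: "\<omega> \<in> \<Omega>"
  define a b c where "a = f \<omega>" "b = g \<omega>" "c = k \<omega>"
  have abc: "a \<in> FV" "b \<in> GV" "c \<in> KV" using im w a_b_c_def by auto
  have m1: "mass \<Omega> P (\<lambda>\<omega>. (f \<omega>, k \<omega>)) (a, c) = \<alpha> a c * (\<Sum>b\<in>GV. \<beta> b c)"
    using mass_marg_mid[OF pm fin(2) im(2), of f k a c] abc fac by (simp add: sum_distrib_left)
  have m2: "mass \<Omega> P (\<lambda>\<omega>. (g \<omega>, k \<omega>)) (b, c) = (\<Sum>a\<in>FV. \<alpha> a c) * \<beta> b c"
    using mass_marg_fst[OF pm fin(1) im(1), of "\<lambda>\<omega>. (g \<omega>, k \<omega>)" "(b,c)"] abc fac
    by (simp add: sum_distrib_right)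
  have m3: "mass \<Omega> P k c = (\<Sum>a\<in>FV. \<alpha> a c) * (\<Sum>b\<in>GV. \<beta> b c)"
  proof -
    have "mass \<Omega> P k c = (\<Sum>a\<in>FV. mass \<Omega> P (\<lambda>\<omega>. (f \<omega>, k \<omega>)) (a, c))"
      by (rule mass_marg_fst[OF pm fin(1) im(1)])
    also have "\<dots> = (\<Sum>a\<in>FV. \<alpha> a c * (\<Sum>b\<in>GV. \<beta> b c))"
      using mass_marg_mid[OF pm fin(2) im(2), of f k] abc fac by (intro sum.cong) (auto simp: sum_distrib_left)
    finally show ?thesis by (simp add: sum_distrib_right)
  qed
  show "mass \<Omega> P (\<lambda>\<omega>. (f \<omega>, g \<omega>, k \<omega>)) (f \<omega>, g \<omega>, k \<omega>) * mass \<Omega> P k (k \<omega>) =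
       mass \<Omega> P (\<lambda>\<omega>. (f \<omega>, k \<omega>)) (f \<omega>, k \<omega>) * mass \<Omega> P (\<lambda>\<omega>. (g \<omega>, k \<omega>)) (g \<omega>, k \<omega>)"
    unfolding a_b_c_def[symmetric] m1 m2 m3 fac[OF abc] by (simp only: mult_ac)
qed


lemma submod:
  assumes pm: "pmf_on \<Omega> P" and fin: "finite FV" "finite GV" "finite KV"
    and im: "f ` \<Omega> \<subseteq> FV" "g ` \<Omega> \<subseteq> GV" "k ` \<Omega> \<subseteq> KV"
  shows "ent \<Omega> P (\<lambda>\<omega>. (f \<omega>, g \<omega>, k \<omega>)) + ent \<Omega> P k \<le>
         ent \<Omega> P (\<lambda>\<omega>. (f \<omega>, k \<omega>)) + ent \<Omega> P (\<lambda>\<omega>. (g \<omega>, k \<omega>))"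
proof -
  define mfgk where "mfgk = mass \<Omega> P (\<lambda>\<omega>. (f \<omega>, g \<omega>, k \<omega>))"
  define mk where "mk = mass \<Omega> P k"
  define mfk where "mfk = mass \<Omega> P (\<lambda>\<omega>. (f \<omega>, k \<omega>))"
  define mgk where "mgk = mass \<Omega> P (\<lambda>\<omega>. (g \<omega>, k \<omega>))"
  define A where "A \<omega> = mfgk (f \<omega>, g \<omega>, k \<omega>) * mk (k \<omega>)" for \<omega>
  define B where "B \<omega> = mfk (f \<omega>, k \<omega>) * mgk (g \<omega>, k \<omega>)" for \<omega>
  have finO: "finite \<Omega>" and P0: "\<And>\<omega>. \<omega> \<in> \<Omega> \<Longrightarrow> 0 \<le> P \<omega>" and P1: "sum P \<Omega> = 1"
    using pm by (auto simp: pmf_on_def)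
  have posAB: "0 < A \<omega> \<and> 0 < B \<omega>" if "\<omega> \<in> \<Omega>" "0 < P \<omega>" for \<omega>
    using mass_pos[OF pm that, of "\<lambda>\<omega>. (f \<omega>, g \<omega>, k \<omega>)"] mass_pos[OF pm that, of k]
      mass_pos[OF pm that, of "\<lambda>\<omega>. (f \<omega>, k \<omega>)"] mass_pos[OF pm that, of "\<lambda>\<omega>. (g \<omega>, k \<omega>)"]
    unfolding A_def B_def mfgk_def mk_def mfk_def mgk_def by auto
  define R where "R v = (case v of (a, b, c) \<Rightarrow> mfk (a, c) * mgk (b, c) / (mfgk (a, b, c) * mk c))" for v
  have mnn: "0 \<le> mfgk v" "0 \<le> mk c" "0 \<le> mfk u" "0 \<le> mgk u'" for v c u u'
    unfolding mfgk_def mk_def mfk_def mgk_def by (simp_all add: mass_nonneg[OF pm])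
  have "(\<Sum>\<omega>\<in>\<Omega>. P \<omega> * (B \<omega> / A \<omega>)) = (\<Sum>\<omega>\<in>\<Omega>. P \<omega> * R (f \<omega>, g \<omega>, k \<omega>))"
    unfolding A_def B_def R_def by simp
  also have "\<dots> = (\<Sum>v\<in>FV \<times> (GV \<times> KV). mfgk v * R v)"
    unfolding mfgk_def using im fin by (intro push[OF pm]) auto
  also have "\<dots> \<le> (\<Sum>v\<in>FV \<times> (GV \<times> KV). case v of (a, b, c) \<Rightarrow> mfk (a, c) * mgk (b, c) / mk c)"
  proof (rule sum_mono)
    fix v assume "v \<in> FV \<times> (GV \<times> KV)"
    obtain a b c where v: "v = (a, b, c)" by (cases v) auto
    show "mfgk v * R v \<le> (case v of (a, b, c) \<Rightarrow> mfk (a, c) * mgk (b, c) / mk c)"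
    proof (cases "mfgk v = 0")
      case True thus ?thesis using mnn v by (auto intro!: divide_nonneg_nonneg)
    next
      case False thus ?thesis using v unfolding R_def by simp
    qed
  qed
  also have "\<dots> = (\<Sum>a\<in>FV. \<Sum>b\<in>GV. \<Sum>c\<in>KV. mfk (a, c) * mgk (b, c) / mk c)"
    by (simp add: sum.cartesian_product)
  also have "\<dots> = (\<Sum>a\<in>FV. \<Sum>c\<in>KV. \<Sum>b\<in>GV. mfk (a, c) * mgk (b, c) / mk c)"
    by (intro sum.cong refl, rule sum.swap)
  also have "\<dots> = (\<Sum>c\<in>KV. \<Sum>a\<in>FV. \<Sum>b\<in>GV. mfk (a, c) * mgk (b, c) / mk c)"
    by (rule sum.swap)
  also have "\<dots> = (\<Sum>c\<in>KV. (\<Sum>a\<in>FV. mfk (a, c)) * (\<Sum>b\<in>GV. mgk (b, c)) / mk c)"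
    by (intro sum.cong refl) (simp add: sum_product sum_divide_distrib)
  also have "\<dots> = (\<Sum>c\<in>KV. mk c * mk c / mk c)"
    unfolding mfk_def mgk_def mk_def
    using mass_marg_fst[OF pm fin(1) im(1), of k] mass_marg_fst[OF pm fin(2) im(2), of k] by simp
  also have "\<dots> = (\<Sum>c\<in>KV. mk c)" by (intro sum.cong) auto
  also have "\<dots> = sum P \<Omega>" unfolding mk_def using mass_sum[OF pm fin(3) im(3)] P1 by simp
  finally have "0 \<le> (\<Sum>\<omega>\<in>\<Omega>. P \<omega> * log 2 (A \<omega> / B \<omega>))"
    by (intro gibbs[OF finO P0 posAB]) auto
  moreover have "P \<omega> * log 2 (A \<omega> / B \<omega>) =
     P \<omega> * log 2 (mfgk (f \<omega>, g \<omega>, k \<omega>)) + P \<omega> * log 2 (mk (k \<omega>))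
     - P \<omega> * log 2 (mfk (f \<omega>, k \<omega>)) - P \<omega> * log 2 (mgk (g \<omega>, k \<omega>))" if "\<omega> \<in> \<Omega>" for \<omega>
  proof (cases "P \<omega> = 0")
    case False
    hence Pp: "0 < P \<omega>" using P0 that by force
    have p: "0 < mfgk (f \<omega>, g \<omega>, k \<omega>)" "0 < mk (k \<omega>)" "0 < mfk (f \<omega>, k \<omega>)" "0 < mgk (g \<omega>, k \<omega>)"
      using mass_pos[OF pm that Pp, of "\<lambda>\<omega>. (f \<omega>, g \<omega>, k \<omega>)"] mass_pos[OF pm that Pp, of k]
      mass_pos[OF pm that Pp, of "\<lambda>\<omega>. (f \<omega>, k \<omega>)"] mass_pos[OF pm that Pp, of "\<lambda>\<omega>. (g \<omega>, k \<omega>)"]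
      unfolding mfgk_def mk_def mfk_def mgk_def by auto
    have "log 2 (A \<omega> / B \<omega>) = log 2 (mfgk (f \<omega>, g \<omega>, k \<omega>)) + log 2 (mk (k \<omega>))
     - log 2 (mfk (f \<omega>, k \<omega>)) - log 2 (mgk (g \<omega>, k \<omega>))"
      unfolding A_def B_def using p by (simp add: log_divide log_mult)
    thus ?thesis by (simp add: right_diff_distrib[symmetric] distrib_left[symmetric])
  qed simp
  ultimately have "0 \<le> (\<Sum>\<omega>\<in>\<Omega>. P \<omega> * log 2 (mfgk (f \<omega>, g \<omega>, k \<omega>)) + P \<omega> * log 2 (mk (k \<omega>))
     - P \<omega> * log 2 (mfk (f \<omega>, k \<omega>)) - P \<omega> * log 2 (mgk (g \<omega>, k \<omega>)))"
    by (metis (no_types, lifting) sum.cong)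
  thus ?thesis unfolding ent_def mfgk_def mk_def mfk_def mgk_def
    by (simp add: sum.distrib sum_subtractf)
qed

lemma ent_const: assumes "pmf_on \<Omega> P" shows "ent \<Omega> P (\<lambda>\<omega>. c) = 0"
proof -
  have "mass \<Omega> P (\<lambda>\<omega>. c) c = 1" using assms unfolding mass_def pmf_on_def by simp
  thus ?thesis unfolding ent_def by simp
qed

lemma ent_nonneg: assumes pm: "pmf_on \<Omega> P" shows "0 \<le> ent \<Omega> P f"
proof -
  have "P \<omega> * log 2 (mass \<Omega> P f (f \<omega>)) \<le> 0" if "\<omega> \<in> \<Omega>" for \<omega>
  proof (cases "P \<omega> = 0")
    case False
    hence "0 < P \<omega>" using pm that unfolding pmf_on_def by force
    moreover have "0 < mass \<Omega> P f (f \<omega>)" using mass_pos[OF pm that] calculation by simp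
    ultimately show ?thesis using mass_le1[OF pm, of f "f \<omega>"]
      by (intro mult_nonneg_nonpos) auto
  qed simp
  thus ?thesis unfolding ent_def by (simp add: sum_nonpos)
qed

lemma mass_pair_le: assumes "pmf_on \<Omega> P"
  shows "mass \<Omega> P (\<lambda>\<omega>. (f \<omega>, g \<omega>)) (a, b) \<le> mass \<Omega> P f a"
  unfolding mass_def using assms by (intro sum_mono) (auto simp: pmf_on_def)

lemma ent_mono: assumes pm: "pmf_on \<Omega> P" shows "ent \<Omega> P f \<le> ent \<Omega> P (\<lambda>\<omega>. (f \<omega>, g \<omega>))"
proof -
  have "P \<omega> * log 2 (mass \<Omega> P (\<lambda>\<omega>. (f \<omega>, g \<omega>)) (f \<omega>, g \<omega>)) \<le> P \<omega> * log 2 (mass \<Omega> P f (f \<omega>))"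
    if "\<omega> \<in> \<Omega>" for \<omega>
  proof (cases "P \<omega> = 0")
    case False
    hence "0 < P \<omega>" using pm that unfolding pmf_on_def by force
    moreover have "0 < mass \<Omega> P (\<lambda>\<omega>. (f \<omega>, g \<omega>)) (f \<omega>, g \<omega>)"
      using mass_pos[OF pm that calculation, of "\<lambda>\<omega>. (f \<omega>, g \<omega>)"] by simp
    ultimately show ?thesis using mass_pair_le[OF pm, of f g "f \<omega>" "g \<omega>"]
      by (intro mult_left_mono) auto
  qed simp
  thus ?thesis unfolding ent_def by (simp add: sum_mono)
qed

lemma ent_le_log_card:
  assumes pm: "pmf_on \<Omega> P" and V: "finite V" "f ` \<Omega> \<subseteq> V" "V \<noteq> {}"
  shows "ent \<Omega> P f \<le> log 2 (card V)"
proof -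
  have finO: "finite \<Omega>" and P0: "\<And>\<omega>. \<omega> \<in> \<Omega> \<Longrightarrow> 0 \<le> P \<omega>" and P1: "sum P \<Omega> = 1"
    using pm by (auto simp: pmf_on_def)
  have cpos: "0 < real (card V)" using V by (simp add: card_gt_0_iff)
  have "(\<Sum>\<omega>\<in>\<Omega>. P \<omega> * ((1 / card V) / mass \<Omega> P f (f \<omega>))) = (\<Sum>v\<in>V. mass \<Omega> P f v * ((1 / card V) / mass \<Omega> P f v))"
    by (rule push[OF pm V(1,2)])
  also have "\<dots> \<le> (\<Sum>v\<in>V. 1 / card V)"
    by (intro sum_mono) (auto simp: mass_nonneg[OF pm])
  also have "\<dots> = sum P \<Omega>" using cpos P1 by simp
  finally have "0 \<le> (\<Sum>\<omega>\<in>\<Omega>. P \<omega> * log 2 (mass \<Omega> P f (f \<omega>) / (1 / card V)))"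
    using mass_pos[OF pm] cpos by (intro gibbs[OF finO P0]) auto
  moreover have "P \<omega> * log 2 (mass \<Omega> P f (f \<omega>) / (1 / card V)) = P \<omega> * log 2 (mass \<Omega> P f (f \<omega>)) + P \<omega> * log 2 (card V)"
    if "\<omega> \<in> \<Omega>" for \<omega>
  proof (cases "P \<omega> = 0")
    case False
    hence "0 < P \<omega>" using P0 that by force
    hence "0 < mass \<Omega> P f (f \<omega>)" using mass_pos[OF pm that] by simp
    thus ?thesis using cpos by (simp add: log_mult distrib_left)
  qed simp
  ultimately have "0 \<le> (\<Sum>\<omega>\<in>\<Omega>. P \<omega> * log 2 (mass \<Omega> P f (f \<omega>)) + P \<omega> * log 2 (card V))"
    by (metis (no_types, lifting) sum.cong)
  also have "\<dots> = (\<Sum>\<omega>\<in>\<Omega>. P \<omega> * log 2 (mass \<Omega> P f (f \<omega>))) + log 2 (card V)"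
    using P1 by (simp add: sum.distrib sum_distrib_right[symmetric])
  finally show ?thesis unfolding ent_def by simp
qed

lemma ent_transfer:
  assumes pm: "pmf_on \<Omega> P" and pm': "pmf_on \<Omega>' P'" and V: "finite V" "f ` \<Omega> \<subseteq> V" "f' ` \<Omega>' \<subseteq> V"
    and eq: "\<And>v. v \<in> V \<Longrightarrow> mass \<Omega> P f v = mass \<Omega>' P' f' v"
  shows "ent \<Omega> P f = ent \<Omega>' P' f'"
  unfolding ent_push[OF pm V(1,2)] ent_push[OF pm' V(1,3)] using eq by simp


lemma bin_ent_eq: "bin_ent q = - (q * log 2 q) - (1 - q) * log 2 (1 - q)"
  unfolding bin_ent_def by auto

lemma bin_ent_right0: "(bin_ent \<longlongrightarrow> bin_ent 0) (at_right 0)"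
  unfolding bin_ent_eq[abs_def] by simp real_asymp

lemma bin_ent_left1: "(bin_ent \<longlongrightarrow> bin_ent 1) (at_left 1)"
  unfolding bin_ent_eq[abs_def] by simp real_asymp

lemma bin_ent_cont: "continuous_on {0..1} bin_ent"
proof (rule continuous_on_IccI[OF bin_ent_right0 bin_ent_left1])
  fix x :: real assume "0 < x" "x < 1"
  thus "bin_ent \<midarrow>x\<rightarrow> bin_ent x"
    unfolding bin_ent_eq[abs_def] by (intro tendsto_intros) auto
qed simp


locale chan = fixes p \<delta> :: real assumes p0: "0 < p" and p1: "p < 1" and d0: "0 \<le> \<delta>" and d1: "\<delta> \<le> 1"
begin

definition "aa = p * (1 - \<delta>) + (1 - p) * \<delta>"
definition "b1 = p * (1 - \<delta>) / aa"
definition "b0 = p * \<delta> / (1 - aa)"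
definition "lam t = t * b1 + (1 - t) * b0"
definition "phi t = bin_ent (lam t)"
definition "gam t = (t, bin_ent t, phi t)"
definition "CC = convex hull (gam ` {0..1})"
definition "KK r = {v \<in> CC. fst v = aa \<and> bin_ent aa - r \<le> fst (snd v)}"
definition "GG r = Inf ((\<lambda>v. snd (snd v)) ` KK r)"

lemma aa: "0 < aa" "aa < 1"
proof -
  have "0 < p * (1 - \<delta>) \<or> 0 < (1 - p) * \<delta>"
    using p0 p1 d0 d1 by (cases "\<delta> = 1") (auto intro!: mult_pos_pos)
  moreover have "0 \<le> p * (1 - \<delta>)" "0 \<le> (1 - p) * \<delta>" using p0 p1 d0 d1 by auto
  ultimately show "0 < aa" unfolding aa_def by linarith
  have "0 < p * \<delta> \<or> 0 < (1 - p) * (1 - \<delta>)"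
    using p0 p1 d0 d1 by (cases "\<delta> = 0") (auto intro!: mult_pos_pos)
  moreover have "0 \<le> p * \<delta>" "0 \<le> (1 - p) * (1 - \<delta>)" using p0 p1 d0 d1 by auto
  moreover have "1 - aa = p * \<delta> + (1 - p) * (1 - \<delta>)" unfolding aa_def by (simp add: algebra_simps)
  ultimately show "aa < 1" by linarith
qed

lemma b_range: "0 \<le> b1" "b1 \<le> 1" "0 \<le> b0" "b0 \<le> 1"
proof -
  have n: "0 \<le> (1 - p) * \<delta>" "0 \<le> p * (1 - \<delta>)" "0 \<le> p * \<delta>" "0 \<le> (1 - p) * (1 - \<delta>)"
    using p0 p1 d0 d1 by auto
  have "p * (1 - \<delta>) \<le> aa" "0 \<le> p * (1 - \<delta>)" unfolding aa_def using n by linarith+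
  thus "0 \<le> b1" "b1 \<le> 1" unfolding b1_def using aa by auto
  have "1 - aa = p * \<delta> + (1 - p) * (1 - \<delta>)" unfolding aa_def by (simp add: algebra_simps)
  hence "p * \<delta> \<le> 1 - aa" "0 \<le> p * \<delta>" using n by linarith+
  thus "0 \<le> b0" "b0 \<le> 1" unfolding b0_def using aa by auto
qed

lemma lam_range: "t \<in> {0..1} \<Longrightarrow> lam t \<in> {0..1}"
proof -
  assume t: "t \<in> {0..1}"
  have "0 \<le> t * b1" "0 \<le> (1 - t) * b0" using t b_range by auto
  moreover have "t * b1 \<le> t" "(1 - t) * b0 \<le> 1 - t" using t b_range by (auto intro: mult_left_le)
  ultimately show ?thesis unfolding lam_def by auto
qed

lemma cont_gam: "continuous_on {0..1} gam"
proof -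
  have cl: "continuous_on {0..1} lam" unfolding lam_def by (intro continuous_intros)
  have "lam ` {0..1} \<subseteq> {0..1}" using lam_range by auto
  hence "continuous_on {0..1} phi" unfolding phi_def
    using continuous_on_compose2[OF bin_ent_cont cl] by simp
  thus ?thesis unfolding gam_def using bin_ent_cont by (intro continuous_intros) auto
qed

lemma compact_CC: "compact CC"
  unfolding CC_def by (intro compact_convex_hull compact_continuous_image cont_gam compact_Icc)

lemma convex_CC: "convex CC" unfolding CC_def by simp

lemma gam_CC: "t \<in> {0..1} \<Longrightarrow> gam t \<in> CC"
  unfolding CC_def by (meson hull_inc image_eqI)

lemma KK_compact: "compact (KK r)"
proof -
  have "KK r = CC \<inter> ({v. fst v = aa} \<inter> {v. bin_ent aa - r \<le> fst (snd v)})" unfolding KK_def by auto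
  moreover have "closed ({v::real \<times> real \<times> real. fst v = aa} \<inter> {v. bin_ent aa - r \<le> fst (snd v)})"
    by (intro closed_Int closed_Collect_eq closed_Collect_le continuous_intros)
  ultimately show ?thesis using compact_CC by (simp add: compact_Int_closed)
qed

lemma KK_ne: "0 \<le> r \<Longrightarrow> gam aa \<in> KK r"
  unfolding KK_def using gam_CC[of aa] aa by (auto simp: gam_def)

lemma KK_bdd: "bdd_below ((\<lambda>v. snd (snd v)) ` KK r)"
  by (intro bounded_imp_bdd_below compact_imp_bounded compact_continuous_image KK_compact continuous_intros)

lemma GG_le: "v \<in> KK r \<Longrightarrow> GG r \<le> snd (snd v)"
  unfolding GG_def by (intro cInf_lower KK_bdd) auto

lemma GG_attain: assumes "0 \<le> r" shows "\<exists>v\<in>KK r. snd (snd v) = GG r"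
proof -
  have c: "continuous_on (KK r) (\<lambda>v. snd (snd v))" by (intro continuous_intros)
  have ne: "KK r \<noteq> {}" using KK_ne[OF assms] by auto
  obtain v where v: "v \<in> KK r" "\<forall>y\<in>KK r. snd (snd v) \<le> snd (snd y)"
    using continuous_attains_inf[OF KK_compact ne c] by blast
  have "GG r = snd (snd v)" unfolding GG_def using v by (intro cInf_eq_minimum) auto
  thus ?thesis using v by auto
qed

lemma GG_mono: assumes "0 \<le> r1" "r1 \<le> r2" shows "GG r2 \<le> GG r1"
proof -
  obtain v where v: "v \<in> KK r1" "snd (snd v) = GG r1" using GG_attain[OF assms(1)] by auto
  have "v \<in> KK r2" using v(1) assms unfolding KK_def by auto
  thus ?thesis using GG_le v(2) by metis
qed

lemma GG_convex: assumes "0 \<le> r1" "0 \<le> r2" "0 \<le> l" "l \<le> 1"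
  shows "GG (l * r1 + (1 - l) * r2) \<le> l * GG r1 + (1 - l) * GG r2"
proof -
  obtain v1 where v1: "v1 \<in> KK r1" "snd (snd v1) = GG r1" using GG_attain[OF assms(1)] by auto
  obtain v2 where v2: "v2 \<in> KK r2" "snd (snd v2) = GG r2" using GG_attain[OF assms(2)] by auto
  define v where "v = l *\<^sub>R v1 + (1 - l) *\<^sub>R v2"
  have "v \<in> CC" unfolding v_def using v1 v2 assms convex_CC unfolding KK_def
    by (auto simp: convex_def)
  moreover have "fst v = aa" using v1 v2 unfolding v_def KK_def by (auto simp: algebra_simps)
  moreover have "bin_ent aa - (l * r1 + (1 - l) * r2) \<le> fst (snd v)"
  proof -
    have "l * (bin_ent aa - r1) \<le> l * fst (snd v1)" "(1 - l) * (bin_ent aa - r2) \<le> (1 - l) * fst (snd v2)"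
      using v1 v2 assms unfolding KK_def by (auto intro!: mult_left_mono)
    thus ?thesis unfolding v_def by (simp add: algebra_simps)
  qed
  ultimately have "v \<in> KK (l * r1 + (1 - l) * r2)" unfolding KK_def by auto
  hence "GG (l * r1 + (1 - l) * r2) \<le> snd (snd v)" by (rule GG_le)
  also have "\<dots> = l * GG r1 + (1 - l) * GG r2" unfolding v_def using v1 v2 by simp
  finally show ?thesis .
qed

end


lemma xlogxy_eq: "xlogxy a b = a * log 2 (a / b)"
  unfolding xlogxy_def by simp

lemma ber_simps[simp]: "ber q True = q" "ber q False = 1 - q"
  unfolding ber_def by auto

lemma bxor_simps[simp]: "bxor True True = False" "bxor False False = False"
  "bxor True False = True" "bxor False True = True"
  unfolding bxor_def by auto

lemma sum_UNIV_bool: "(\<Sum>b\<in>(UNIV::bool set). f b) = f True + f False"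
  by (simp add: UNIV_bool add.commute)

lemma term_H:
  assumes "0 \<le> x" "x \<le> w"
  shows "- (x * log 2 (x / w)) - ((w - x) * log 2 ((w - x) / w)) = w * bin_ent (x / w)"
proof (cases "w = 0")
  case True thus ?thesis using assms by (simp add: bin_ent_eq)
next
  case False
  hence w: "0 < w" using assms by simp
  define c where "c = x / w"
  have x: "x = w * c" unfolding c_def using w by simp
  have wx: "w - x = w * (1 - c)" unfolding x by (simp add: algebra_simps)
  have e1: "x / w = c" unfolding c_def ..
  have e2: "(w - x) / w = 1 - c" using w unfolding wx by simp
  have "- (x * log 2 (x / w)) - ((w - x) * log 2 ((w - x) / w)) = - (w * c * log 2 c) - (w * (1 - c) * log 2 (1 - c))"
    unfolding e1 e2 x[symmetric] wx[symmetric] ..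
  also have "\<dots> = w * bin_ent c" unfolding bin_ent_eq by (simp add: algebra_simps)
  finally show ?thesis unfolding e1 .
qed

lemma log_aux: "0 < y \<Longrightarrow> 0 < w \<Longrightarrow> 0 < \<beta> \<Longrightarrow> log 2 (y / (\<beta> * w)) = log 2 (y / w) - log 2 \<beta>"
proof -
  assume a: "0 < y" "0 < w" "0 < \<beta>"
  have e: "y / (\<beta> * w) = (y / w) / \<beta>" by (simp add: mult.commute)
  have "log 2 ((y / w) / \<beta>) = log 2 (y / w) - log 2 \<beta>" using a by (simp add: log_divide log_mult)
  thus ?thesis unfolding e .
qed

lemma term_I:
  assumes "0 \<le> x" "x \<le> w" "0 < \<alpha>" "\<alpha> < 1"
  shows "x * log 2 (x / (\<alpha> * w)) + (w - x) * log 2 ((w - x) / ((1 - \<alpha>) * w))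
     = - (w * bin_ent (x / w)) - x * log 2 \<alpha> - (w - x) * log 2 (1 - \<alpha>)"
proof -
  have A: "x * log 2 (x / (\<alpha> * w)) = x * log 2 (x / w) - x * log 2 \<alpha>"
  proof (cases "x = 0")
    case False
    hence "0 < x" "0 < w" using assms by auto
    thus ?thesis using assms log_aux[of x w \<alpha>] by (simp add: right_diff_distrib)
  qed simp
  have B: "(w - x) * log 2 ((w - x) / ((1 - \<alpha>) * w)) = (w - x) * log 2 ((w - x) / w) - (w - x) * log 2 (1 - \<alpha>)"
  proof (cases "w - x = 0")
    case False
    hence "0 < w - x" "0 < w" using assms by auto
    thus ?thesis using assms log_aux[of "w - x" w "1 - \<alpha>"] by (simp add: right_diff_distrib)
  qed simp
  show ?thesis unfolding A B using term_H[OF assms(1,2)] by linarith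
qed

context chan begin

lemma pY1_T: "pY1 p \<delta> True = aa" and pY1_F: "pY1 p \<delta> False = 1 - aa"
  unfolding pY1_def aa_def by (simp_all add: sum_UNIV_bool algebra_simps)

lemma pYU_eq: "pYU p \<delta> q y u = pY1 p \<delta> y * q y u"
  unfolding pYU_def pY1_def pZYU_def by (simp add: sum_distrib_right)

lemma pU_eq: "pU p \<delta> q u = aa * q True u + (1 - aa) * q False u"
  unfolding pU_def pZYU_def aa_def by (simp add: sum_UNIV_bool algebra_simps)

lemma pZU_T: "pZU p \<delta> q True u = p * (1 - \<delta>) * q True u + p * \<delta> * q False u"
  and pZU_F: "pZU p \<delta> q False u = (1 - p) * \<delta> * q True u + (1 - p) * (1 - \<delta>) * q False u"
  unfolding pZU_def pZYU_def by (simp_all add: sum_UNIV_bool)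

definition "ww q j = pU p \<delta> q j"
definition "tt q j = aa * q True j / ww q j"

lemma tc_nonneg: "test_channel m q \<Longrightarrow> 0 \<le> q y u" unfolding test_channel_def by auto
lemma tc_sum: "test_channel m q \<Longrightarrow> (\<Sum>u<m. q y u) = 1" unfolding test_channel_def by auto

lemma ww_nonneg: "test_channel m q \<Longrightarrow> 0 \<le> ww q j"
  unfolding ww_def pU_eq using aa tc_nonneg[of m q] by (auto intro!: add_nonneg_nonneg)

lemma wt: "test_channel m q \<Longrightarrow> ww q j * tt q j = aa * q True j"
proof -
  assume tc: "test_channel m q"
  show ?thesis
  proof (cases "ww q j = 0")
    case True
    hence "aa * q True j + (1 - aa) * q False j = 0" unfolding ww_def pU_eq .
    moreover have "0 \<le> aa * q True j" "0 \<le> (1 - aa) * q False j" using aa tc_nonneg[OF tc] by auto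
    ultimately have "aa * q True j = 0" by linarith
    thus ?thesis using True by simp
  qed (simp add: tt_def)
qed

lemma tt_range: "test_channel m q \<Longrightarrow> tt q j \<in> {0..1}"
proof -
  assume tc: "test_channel m q"
  have "0 \<le> aa * q True j" "0 \<le> (1 - aa) * q False j" using aa tc_nonneg[OF tc] by auto
  hence "aa * q True j \<le> ww q j" unfolding ww_def pU_eq by simp
  thus ?thesis unfolding tt_def using \<open>0 \<le> aa * q True j\<close>
    by (auto simp: divide_le_eq_1 intro: divide_nonneg_nonneg)
qed

lemma sum_ww: "test_channel m q \<Longrightarrow> (\<Sum>j<m. ww q j) = 1"
  unfolding ww_def pU_eq by (simp add: sum.distrib sum_distrib_left[symmetric] tc_sum)

lemma sum_wt: "test_channel m q \<Longrightarrow> (\<Sum>j<m. ww q j * tt q j) = aa"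
  using wt by (simp add: sum_distrib_left[symmetric] tc_sum)

lemma rep_H: assumes tc: "test_channel m q"
  shows "H_ZU p \<delta> m q = (\<Sum>j<m. ww q j * phi (tt q j))"
proof -
  have "H_ZU p \<delta> m q = (\<Sum>j<m. - xlogxy (pZU p \<delta> q True j) (pU p \<delta> q j) - xlogxy (pZU p \<delta> q False j) (pU p \<delta> q j))"
    unfolding H_ZU_def sum_UNIV_bool by (simp add: sum.distrib sum_negf[symmetric] sum_subtractf)
  also have "\<dots> = (\<Sum>j<m. ww q j * phi (tt q j))"
  proof (rule sum.cong[OF refl])
    fix j
    define x where "x = pZU p \<delta> q True j"
    have qq: "0 \<le> q True j" "0 \<le> q False j" using tc_nonneg[OF tc] by auto
    have F: "pZU p \<delta> q False j = ww q j - x"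
      unfolding x_def ww_def pZU_T pZU_F pU_eq aa_def by (simp add: algebra_simps)
    have x0: "0 \<le> x" unfolding x_def pZU_T using p0 p1 d0 d1 qq by (auto intro!: add_nonneg_nonneg)
    have x1: "x \<le> ww q j" using F qq p0 p1 d0 d1 unfolding pZU_F
      by (metis add_nonneg_nonneg diff_ge_0_iff_ge mult_nonneg_nonneg le_diff_eq diff_le_eq x0
          zero_le_mult_iff less_eq_real_def)
    show "- xlogxy (pZU p \<delta> q True j) (pU p \<delta> q j) - xlogxy (pZU p \<delta> q False j) (pU p \<delta> q j) = ww q j * phi (tt q j)"
    proof (cases "ww q j = 0")
      case True
      hence "x = 0" using x0 x1 by simp
      thus ?thesis unfolding xlogxy_eq F x_def[symmetric] ww_def[symmetric] using True by simp
    next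
      case False
      have lam_eq: "x / ww q j = lam (tt q j)"
      proof -
        have "lam (tt q j) = (aa * q True j * b1 + (ww q j - aa * q True j) * b0) / ww q j"
          unfolding lam_def tt_def using False by (simp add: field_simps)
        also have "ww q j - aa * q True j = (1 - aa) * q False j" unfolding ww_def pU_eq by simp
        also have "aa * q True j * b1 + (1 - aa) * q False j * b0 = x"
          unfolding x_def pZU_T b1_def b0_def using aa by simp
        finally show ?thesis by simp
      qed
      show ?thesis
        unfolding xlogxy_eq F x_def[symmetric] ww_def[symmetric] phi_def lam_eq[symmetric]
        using term_H[OF x0 x1] by simp
    qed
  qed
  finally show ?thesis .
qed

lemma rep_I: assumes tc: "test_channel m q"
  shows "I_UY p \<delta> m q = bin_ent aa - (\<Sum>j<m. ww q j * bin_ent (tt q j))"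
proof -
  have "I_UY p \<delta> m q = (\<Sum>j<m. xlogxy (pYU p \<delta> q True j) (aa * ww q j) + xlogxy (pYU p \<delta> q False j) ((1 - aa) * ww q j))"
    unfolding I_UY_def sum_UNIV_bool pY1_T pY1_F ww_def by (simp add: sum.distrib)
  also have "\<dots> = (\<Sum>j<m. - (ww q j * bin_ent (tt q j)) - aa * q True j * log 2 aa - (1 - aa) * q False j * log 2 (1 - aa))"
  proof (rule sum.cong[OF refl])
    fix j
    define x where "x = aa * q True j"
    have qq: "0 \<le> q True j" "0 \<le> q False j" using tc_nonneg[OF tc] by auto
    have F: "pYU p \<delta> q False j = ww q j - x" unfolding x_def pYU_eq pY1_F ww_def pU_eq by simp
    have x0: "0 \<le> x" unfolding x_def using aa qq by simp
    have "0 \<le> (1 - aa) * q False j" using aa qq by simp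
    hence x1: "x \<le> ww q j" using F unfolding pYU_eq pY1_F by simp
    have T: "pYU p \<delta> q True j = x" unfolding x_def pYU_eq pY1_T ..
    have tx: "tt q j = x / ww q j" unfolding tt_def x_def ..
    have "ww q j - x = (1 - aa) * q False j" unfolding x_def ww_def pU_eq by simp
    thus "xlogxy (pYU p \<delta> q True j) (aa * ww q j) + xlogxy (pYU p \<delta> q False j) ((1 - aa) * ww q j) =
      - (ww q j * bin_ent (tt q j)) - aa * q True j * log 2 aa - (1 - aa) * q False j * log 2 (1 - aa)"
      unfolding xlogxy_eq T F tx using term_I[OF x0 x1 aa] unfolding x_def by simp
  qed
  also have "\<dots> = - (\<Sum>j<m. ww q j * bin_ent (tt q j)) - aa * log 2 aa - (1 - aa) * log 2 (1 - aa)"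
    using tc_sum[OF tc] by (simp add: sum_subtractf sum_negf sum_distrib_left[symmetric]
        mult.assoc[symmetric] sum_distrib_right[symmetric])
  finally show ?thesis unfolding bin_ent_eq by simp
qed

lemma point_KK: assumes tc: "test_channel m q" and r: "I_UY p \<delta> m q \<le> r"
  shows "(aa, bin_ent aa - I_UY p \<delta> m q, H_ZU p \<delta> m q) \<in> KK r"
proof -
  have "(\<Sum>j<m. ww q j *\<^sub>R gam (tt q j)) \<in> CC"
    using sum_ww[OF tc] ww_nonneg[OF tc] gam_CC tt_range[OF tc]
    by (intro convex_sum[OF _ convex_CC]) auto
  moreover have "(\<Sum>j<m. ww q j *\<^sub>R gam (tt q j)) = (aa, bin_ent aa - I_UY p \<delta> m q, H_ZU p \<delta> m q)"
    unfolding rep_I[OF tc] rep_H[OF tc] using sum_wt[OF tc]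
    by (simp add: gam_def fst_sum snd_sum prod_eq_iff)
  ultimately show ?thesis unfolding KK_def using r by auto
qed

lemma GG_le_H: "test_channel m q \<Longrightarrow> I_UY p \<delta> m q \<le> r \<Longrightarrow> GG r \<le> H_ZU p \<delta> m q"
  using GG_le[OF point_KK] by simp

end


context chan begin

lemma construct:
  assumes r: "0 \<le> r"
  shows "\<exists>m q. m \<le> 4 \<and> test_channel m q \<and> I_UY p \<delta> m q \<le> r \<and> H_ZU p \<delta> m q = GG r"
proof -
  obtain v where v: "v \<in> KK r" "snd (snd v) = GG r" using GG_attain[OF r] by auto
  have "v \<in> convex hull (gam ` {0..1})" using v(1) unfolding KK_def CC_def by auto
  then obtain S where S: "finite S" "S \<subseteq> gam ` {0..1}" "card S \<le> DIM(real \<times> real \<times> real) + 1"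
    "v \<in> convex hull S"
    unfolding caratheodory[of "gam ` {0..1}"] by blast
  obtain u where u: "\<forall>x\<in>S. 0 \<le> u x" "sum u S = 1" "(\<Sum>x\<in>S. u x *\<^sub>R x) = v"
    using S(4) unfolding convex_hull_finite[OF S(1)] by blast
  define m where "m = card S"
  obtain e where e: "bij_betw e {0..<m} S" using ex_bij_betw_nat_finite[OF S(1)] unfolding m_def by blast
  have m4: "m \<le> 4" using S(3) unfolding m_def by simp
  define t where "t j = fst (e j)" for j
  define \<omega> where "\<omega> j = u (e j)" for j
  have eS: "e j \<in> S" if "j < m" for j using e that unfolding bij_betw_def by auto
  have tr: "t j \<in> {0..1}" and eg: "e j = gam (t j)" if jm: "j < m" for j
  proof -
    obtain s where "s \<in> {0..1}" "e j = gam s" using eS[OF jm] S(2) by auto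
    thus "t j \<in> {0..1}" "e j = gam (t j)" unfolding t_def by (auto simp: gam_def)
  qed
  have \<omega>0: "0 \<le> \<omega> j" if "j < m" for j using u(1) eS[OF that] unfolding \<omega>_def by auto
  have reidx: "(\<Sum>j<m. g (e j)) = (\<Sum>x\<in>S. g x)" for g :: "real \<times> real \<times> real \<Rightarrow> real \<times> real \<times> real"
    using sum.reindex_bij_betw[OF e, of g] by (simp add: lessThan_atLeast0)
  have reidx': "(\<Sum>j<m. g (e j)) = (\<Sum>x\<in>S. g x)" for g :: "real \<times> real \<times> real \<Rightarrow> real"
    using sum.reindex_bij_betw[OF e, of g] by (simp add: lessThan_atLeast0)
  have sw: "(\<Sum>j<m. \<omega> j) = 1" unfolding \<omega>_def using reidx' u(2) by simp
  have vsum: "(\<Sum>j<m. \<omega> j *\<^sub>R gam (t j)) = v"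
  proof -
    have "(\<Sum>j<m. \<omega> j *\<^sub>R gam (t j)) = (\<Sum>j<m. u (e j) *\<^sub>R e j)"
      unfolding \<omega>_def using eg by (intro sum.cong) auto
    also have "\<dots> = v" using reidx[of "\<lambda>x. u x *\<^sub>R x"] u(3) by simp
    finally show ?thesis .
  qed
  have c1: "(\<Sum>j<m. \<omega> j * t j) = aa" and c2: "(\<Sum>j<m. \<omega> j * bin_ent (t j)) = fst (snd v)"
    and c3: "(\<Sum>j<m. \<omega> j * phi (t j)) = snd (snd v)"
    using v(1) arg_cong[OF vsum, of fst] arg_cong[OF vsum, of "\<lambda>x. fst (snd x)"] arg_cong[OF vsum, of "\<lambda>x. snd (snd x)"]
    unfolding KK_def by (auto simp: fst_sum snd_sum gam_def)
  define q where "q y j = (if j < m then (if y then \<omega> j * t j / aa else \<omega> j * (1 - t j) / (1 - aa)) else 0)" for y j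
  have tc: "test_channel m q"
    unfolding test_channel_def
  proof (intro conjI allI)
    fix y u show "0 \<le> q y u" unfolding q_def using \<omega>0 tr aa by auto
  next
    fix y
    show "(\<Sum>u<m. q y u) = 1"
    proof (cases y)
      case True
      have "(\<Sum>u<m. q y u) = (\<Sum>u<m. \<omega> u * t u) / aa" unfolding q_def using True
        by (simp add: sum_divide_distrib)
      thus ?thesis using c1 aa by simp
    next
      case False
      have "(\<Sum>u<m. q y u) = (\<Sum>u<m. \<omega> u - \<omega> u * t u) / (1 - aa)" unfolding q_def using False
        by (simp add: sum_divide_distrib algebra_simps)
      also have "\<dots> = (1 - aa) / (1 - aa)" using sw c1 by (simp add: sum_subtractf)
      finally show ?thesis using aa by simp
    qed
  qed
  have ww_eq: "ww q j = \<omega> j" if "j < m" for j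
  proof -
    have "1 - aa \<noteq> 0" "aa \<noteq> 0" using aa by auto
    hence "aa * (\<omega> j * t j / aa) = \<omega> j * t j" "(1 - aa) * (\<omega> j * (1 - t j) / (1 - aa)) = \<omega> j * (1 - t j)"
      by simp_all
    hence "ww q j = \<omega> j * t j + \<omega> j * (1 - t j)" unfolding ww_def pU_eq q_def using that by simp
    thus ?thesis by (simp add: algebra_simps)
  qed
  have tt_eq: "ww q j * g (tt q j) = \<omega> j * g (t j)" if "j < m" for j and g
  proof (cases "\<omega> j = 0")
    case False
    have "tt q j = t j" unfolding tt_def ww_eq[OF that] q_def using that aa False by simp
    thus ?thesis using ww_eq[OF that] by simp
  qed (simp add: ww_eq[OF that])
  have "H_ZU p \<delta> m q = GG r" unfolding rep_H[OF tc] using tt_eq c3 v(2) by simp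
  moreover have "I_UY p \<delta> m q \<le> r" unfolding rep_I[OF tc] using tt_eq[where g=bin_ent] c2 v(1)
    unfolding KK_def by simp
  ultimately show ?thesis using m4 tc by blast
qed

end


definition pi1 :: "real \<Rightarrow> real \<Rightarrow> bool \<Rightarrow> bool \<Rightarrow> real" where
  "pi1 p \<delta> a b = ber p a * ber \<delta> (bxor b a)"

lemma xlog_split2: "0 \<le> x \<Longrightarrow> (0 < x \<Longrightarrow> 0 < y) \<Longrightarrow> x * log 2 (x / y) = x * log 2 x - x * log 2 y"
  by (cases "x = 0") (auto simp: log_divide right_diff_distrib)

lemma xlog_split3: "0 \<le> x \<Longrightarrow> (0 < x \<Longrightarrow> 0 < y \<and> 0 < z) \<Longrightarrow>
    x * log 2 (x / (y * z)) = x * log 2 x - x * log 2 y - x * log 2 z"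
  by (cases "x = 0") (auto simp: log_divide log_mult right_diff_distrib distrib_left)

context chan begin

lemma pi1_nonneg: "0 \<le> pi1 p \<delta> a b"
  unfolding pi1_def ber_def using p0 p1 d0 d1 by auto

lemma SL:
  fixes f g :: "'a \<Rightarrow> bool" and k :: "'a \<Rightarrow> 'u"
  assumes pm: "pmf_on \<Omega> P" and U: "finite U" "k ` \<Omega> \<subseteq> U"
    and \<kappa>0: "\<And>b u. 0 \<le> \<kappa> b u" and \<kappa>1: "\<And>b. (\<Sum>u\<in>U. \<kappa> b u) = 1"
    and fac: "\<And>a b u. u \<in> U \<Longrightarrow> mass \<Omega> P (\<lambda>\<omega>. (f \<omega>, g \<omega>, k \<omega>)) (a, b, u) = pi1 p \<delta> a b * \<kappa> b u"
  shows "GG (ent \<Omega> P g + ent \<Omega> P k - ent \<Omega> P (\<lambda>\<omega>. (g \<omega>, k \<omega>)))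
         \<le> ent \<Omega> P (\<lambda>\<omega>. (f \<omega>, k \<omega>)) - ent \<Omega> P k"
proof -
  define m where "m = card U"
  obtain e where e: "bij_betw e {0..<m} U" using ex_bij_betw_nat_finite[OF U(1)] unfolding m_def by blast
  have reidx: "(\<Sum>u\<in>U. F u) = (\<Sum>j<m. F (e j))" for F :: "'u \<Rightarrow> real"
    using sum.reindex_bij_betw[OF e, of F] by (simp add: lessThan_atLeast0)
  have eU: "j < m \<Longrightarrow> e j \<in> U" for j using e unfolding bij_betw_def by auto
  define q where "q y j = (if j < m then \<kappa> y (e j) else 0)" for y j
  have tc: "test_channel m q" unfolding test_channel_def q_def
    using \<kappa>0 \<kappa>1 reidx by auto
  have finB: "finite (UNIV :: bool set)" by simp
  have imB: "f ` \<Omega> \<subseteq> UNIV" "g ` \<Omega> \<subseteq> UNIV" by auto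
  have mFK: "mass \<Omega> P (\<lambda>\<omega>. (f \<omega>, k \<omega>)) (a, e j) = pZU p \<delta> q a j" if "j < m" for a j
    unfolding mass_marg_mid[OF pm finB imB(2), of f k] pZU_def pZYU_def q_def
    using fac eU[OF that] that by (simp add: pi1_def)
  have mGK: "mass \<Omega> P (\<lambda>\<omega>. (g \<omega>, k \<omega>)) (b, e j) = pYU p \<delta> q b j" if "j < m" for b j
    using mass_marg_fst[OF pm finB imB(1), of "\<lambda>\<omega>. (g \<omega>, k \<omega>)" "(b, e j)"] fac eU[OF that] that
    unfolding pYU_def pZYU_def q_def by (simp add: pi1_def)
  have mK: "mass \<Omega> P k (e j) = pU p \<delta> q j" if "j < m" for j
    using mass_marg_fst[OF pm finB imB(2), of k "e j"] mGK[OF that] unfolding pU_def pYU_def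
    by (simp add: sum_UNIV_bool)
  have mG: "mass \<Omega> P g b = pY1 p \<delta> b" for b
  proof -
    have "mass \<Omega> P g b = (\<Sum>u\<in>U. mass \<Omega> P (\<lambda>\<omega>. (g \<omega>, k \<omega>)) (b, u))"
      by (rule mass_marg[OF pm U])
    also have "\<dots> = (\<Sum>j<m. pYU p \<delta> q b j)" unfolding reidx using mGK by simp
    also have "\<dots> = pY1 p \<delta> b" using tc_sum[OF tc] by (simp add: pYU_eq sum_distrib_left[symmetric])
    finally show ?thesis .
  qed
  have pU0: "0 \<le> pU p \<delta> q j" for j using ww_nonneg[OF tc] unfolding ww_def .
  have pZU0: "0 \<le> pZU p \<delta> q a j" for a j
    unfolding pZU_def pZYU_def using tc_nonneg[OF tc] p0 p1 d0 d1 by (auto intro!: sum_nonneg simp: ber_def)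
  have pYU0: "0 \<le> pYU p \<delta> q b j" for b j
    unfolding pYU_def pZYU_def using tc_nonneg[OF tc] p0 p1 d0 d1 by (auto intro!: sum_nonneg simp: ber_def)
  have sZU: "(\<Sum>a\<in>UNIV. pZU p \<delta> q a j) = pU p \<delta> q j" for j
    unfolding pZU_def pU_def ..
  have sYU1: "(\<Sum>b\<in>UNIV. pYU p \<delta> q b j) = pU p \<delta> q j" for j
    unfolding pYU_def pU_def by (rule sum.swap)
  have sYU2: "(\<Sum>j<m. pYU p \<delta> q b j) = pY1 p \<delta> b" for b
    using tc_sum[OF tc] by (simp add: pYU_eq sum_distrib_left[symmetric])
  have ZUpos: "0 < pZU p \<delta> q a j \<Longrightarrow> 0 < pU p \<delta> q j" for a j
  proof -
    assume "0 < pZU p \<delta> q a j"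
    moreover have "pZU p \<delta> q a j \<le> pU p \<delta> q j" unfolding sZU[symmetric]
      using pZU0 by (intro member_le_sum) auto
    ultimately show ?thesis by simp
  qed
  have YUpos: "0 < pYU p \<delta> q b j \<Longrightarrow> 0 < pY1 p \<delta> b \<and> 0 < pU p \<delta> q j" for b j
  proof -
    assume a: "0 < pYU p \<delta> q b j"
    have l1: "pYU p \<delta> q b j \<le> pU p \<delta> q j" unfolding sYU1[symmetric]
      using pYU0 by (intro member_le_sum) auto
    have qle: "q b j \<le> 1"
    proof (cases "j < m")
      case True thus ?thesis using tc_nonneg[OF tc] tc_sum[OF tc, of b]
        by (metis finite_lessThan lessThan_iff member_le_sum)
    qed (simp add: q_def)
    have "pYU p \<delta> q b j \<le> pY1 p \<delta> b" using tc_nonneg[OF tc] qle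
      unfolding pYU_eq using pY1_T pY1_F aa
      by (cases b) (auto intro!: mult_left_le)
    thus ?thesis using a l1 by simp
  qed
  have eFK: "ent \<Omega> P (\<lambda>\<omega>. (f \<omega>, k \<omega>)) = - (\<Sum>a\<in>UNIV. \<Sum>j<m. pZU p \<delta> q a j * log 2 (pZU p \<delta> q a j))"
  proof -
    have "ent \<Omega> P (\<lambda>\<omega>. (f \<omega>, k \<omega>)) = - (\<Sum>v\<in>UNIV \<times> U. mass \<Omega> P (\<lambda>\<omega>. (f \<omega>, k \<omega>)) v * log 2 (mass \<Omega> P (\<lambda>\<omega>. (f \<omega>, k \<omega>)) v))"
      using U by (intro ent_push[OF pm]) auto
    also have "\<dots> = - (\<Sum>a\<in>UNIV. \<Sum>u\<in>U. mass \<Omega> P (\<lambda>\<omega>. (f \<omega>, k \<omega>)) (a, u) * log 2 (mass \<Omega> P (\<lambda>\<omega>. (f \<omega>, k \<omega>)) (a, u)))"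
      by (simp add: sum.cartesian_product)
    also have "\<dots> = - (\<Sum>a\<in>UNIV. \<Sum>j<m. pZU p \<delta> q a j * log 2 (pZU p \<delta> q a j))"
      unfolding reidx by (intro arg_cong[where f=uminus] sum.cong refl) (simp add: mFK)
    finally show ?thesis .
  qed
  have eK: "ent \<Omega> P k = - (\<Sum>j<m. pU p \<delta> q j * log 2 (pU p \<delta> q j))"
    unfolding ent_push[OF pm U] reidx by (intro arg_cong[where f=uminus] sum.cong refl) (simp add: mK)
  have eG: "ent \<Omega> P g = - (\<Sum>b\<in>UNIV. pY1 p \<delta> b * log 2 (pY1 p \<delta> b))"
    unfolding ent_push[OF pm finB imB(2)] mG ..
  have eGK: "ent \<Omega> P (\<lambda>\<omega>. (g \<omega>, k \<omega>)) = - (\<Sum>a\<in>UNIV. \<Sum>j<m. pYU p \<delta> q a j * log 2 (pYU p \<delta> q a j))"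
  proof -
    have "ent \<Omega> P (\<lambda>\<omega>. (g \<omega>, k \<omega>)) = - (\<Sum>v\<in>UNIV \<times> U. mass \<Omega> P (\<lambda>\<omega>. (g \<omega>, k \<omega>)) v * log 2 (mass \<Omega> P (\<lambda>\<omega>. (g \<omega>, k \<omega>)) v))"
      using U by (intro ent_push[OF pm]) auto
    also have "\<dots> = - (\<Sum>a\<in>UNIV. \<Sum>u\<in>U. mass \<Omega> P (\<lambda>\<omega>. (g \<omega>, k \<omega>)) (a, u) * log 2 (mass \<Omega> P (\<lambda>\<omega>. (g \<omega>, k \<omega>)) (a, u)))"
      by (simp add: sum.cartesian_product)
    also have "\<dots> = - (\<Sum>a\<in>UNIV. \<Sum>j<m. pYU p \<delta> q a j * log 2 (pYU p \<delta> q a j))"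
      unfolding reidx by (intro arg_cong[where f=uminus] sum.cong refl) (simp add: mGK)
    finally show ?thesis .
  qed
  have H: "H_ZU p \<delta> m q = ent \<Omega> P (\<lambda>\<omega>. (f \<omega>, k \<omega>)) - ent \<Omega> P k"
  proof -
    have "H_ZU p \<delta> m q = - (\<Sum>a\<in>UNIV. \<Sum>j<m. pZU p \<delta> q a j * log 2 (pZU p \<delta> q a j) - pZU p \<delta> q a j * log 2 (pU p \<delta> q j))"
      unfolding H_ZU_def xlogxy_eq using xlog_split2[OF pZU0 ZUpos] by simp
    also have "\<dots> = - (\<Sum>a\<in>UNIV. \<Sum>j<m. pZU p \<delta> q a j * log 2 (pZU p \<delta> q a j))
        + (\<Sum>j<m. (\<Sum>a\<in>UNIV. pZU p \<delta> q a j) * log 2 (pU p \<delta> q j))"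
      by (simp add: sum_subtractf sum_distrib_right sum.swap[of _ UNIV])
    finally show ?thesis unfolding eFK eK sZU by simp
  qed
  have I: "I_UY p \<delta> m q = ent \<Omega> P g + ent \<Omega> P k - ent \<Omega> P (\<lambda>\<omega>. (g \<omega>, k \<omega>))"
  proof -
    have "I_UY p \<delta> m q = (\<Sum>b\<in>UNIV. \<Sum>j<m. pYU p \<delta> q b j * log 2 (pYU p \<delta> q b j)
          - pYU p \<delta> q b j * log 2 (pY1 p \<delta> b) - pYU p \<delta> q b j * log 2 (pU p \<delta> q j))"
      unfolding I_UY_def xlogxy_eq using xlog_split3[OF pYU0 YUpos] by simp
    also have "\<dots> = (\<Sum>b\<in>UNIV. \<Sum>j<m. pYU p \<delta> q b j * log 2 (pYU p \<delta> q b j))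
          - (\<Sum>b\<in>UNIV. (\<Sum>j<m. pYU p \<delta> q b j) * log 2 (pY1 p \<delta> b))
          - (\<Sum>j<m. (\<Sum>b\<in>UNIV. pYU p \<delta> q b j) * log 2 (pU p \<delta> q j))"
      by (simp add: sum_subtractf sum_distrib_right sum.swap[of _ UNIV])
    finally show ?thesis unfolding eGK eK eG sYU1 sYU2 by simp
  qed
  show ?thesis using GG_le_H[OF tc order_refl] unfolding H I .
qed

end


lemma seqs_Suc: "seqs (Suc n) = (\<lambda>(b, l). b # l) ` (UNIV \<times> seqs n)"
  unfolding seqs_def by (auto simp: image_iff length_Suc_conv)

lemma seqs_0: "seqs 0 = {[]}" unfolding seqs_def by auto

lemma finite_seqs: "finite (seqs n)"
  by (induction n) (auto simp: seqs_0 seqs_Suc)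

lemma card_seqs: "card (seqs n) = 2 ^ n"
  using card_lists_length_eq[of "UNIV :: bool set" n] unfolding seqs_def by simp

lemma sum_seqs_Suc: "(\<Sum>x\<in>seqs (Suc n). f x) = (\<Sum>b\<in>UNIV. \<Sum>l\<in>seqs n. f (b # l))"
proof -
  have "inj_on (\<lambda>(b, l). b # l) (UNIV \<times> seqs n)" by (auto simp: inj_on_def)
  hence "(\<Sum>x\<in>seqs (Suc n). f x) = (\<Sum>(b, l)\<in>UNIV \<times> seqs n. f (b # l))"
    unfolding seqs_Suc by (simp add: sum.reindex case_prod_unfold)
  thus ?thesis by (simp add: sum.cartesian_product)
qed

lemma seqs_Suc_mem: "x \<in> seqs (Suc n) \<longleftrightarrow> (\<exists>b l. x = b # l \<and> l \<in> seqs n)"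
  unfolding seqs_def by (auto simp: length_Suc_conv)

lemma Cons_seqs: "b # l \<in> seqs (Suc n) \<longleftrightarrow> l \<in> seqs n"
  unfolding seqs_def by auto

definition pin :: "real \<Rightarrow> real \<Rightarrow> nat \<Rightarrow> bool list \<Rightarrow> bool list \<Rightarrow> real" where
  "pin p \<delta> n zs ys = (\<Prod>i<n. pi1 p \<delta> (zs ! i) (ys ! i))"

lemma pin_Cons: "pin p \<delta> (Suc n) (a # zs) (b # ys) = pi1 p \<delta> a b * pin p \<delta> n zs ys"
  unfolding pin_def prod.lessThan_Suc_shift by simp

lemma pin_0: "pin p \<delta> 0 zs ys = 1" unfolding pin_def by simp

definition pY :: "real \<Rightarrow> real \<Rightarrow> bool \<Rightarrow> real" where "pY p \<delta> b = (\<Sum>a\<in>UNIV. pi1 p \<delta> a b)"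
definition pinY :: "real \<Rightarrow> real \<Rightarrow> nat \<Rightarrow> bool list \<Rightarrow> real" where
  "pinY p \<delta> n ys = (\<Sum>zs\<in>seqs n. pin p \<delta> n zs ys)"

lemma pinY_Cons: "pinY p \<delta> (Suc n) (b # ys) = pY p \<delta> b * pinY p \<delta> n ys"
  unfolding pinY_def pY_def sum_seqs_Suc pin_Cons by (simp add: sum_product)

lemma sum_pY: "(\<Sum>b\<in>UNIV. pY p \<delta> b) = 1"
  unfolding pY_def pi1_def by (simp add: sum_UNIV_bool algebra_simps)

lemma sum_pinY: "(\<Sum>ys\<in>seqs n. pinY p \<delta> n ys) = 1"
proof (induction n)
  case 0 thus ?case by (simp add: seqs_0 pinY_def pin_0)
next
  case (Suc n)
  thus ?case unfolding sum_seqs_Suc pinY_Cons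
    by (simp add: sum_distrib_left[symmetric] sum_distrib_right[symmetric] sum_pY)
qed

definition kern :: "nat \<Rightarrow> 'w set \<Rightarrow> (bool list \<Rightarrow> 'w \<Rightarrow> real) \<Rightarrow> bool" where
  "kern n W Q \<longleftrightarrow> (\<forall>y w. 0 \<le> Q y w) \<and> (\<forall>y\<in>seqs n. (\<Sum>w\<in>W. Q y w) = 1)"

definition Om :: "nat \<Rightarrow> 'w set \<Rightarrow> (bool list \<times> bool list \<times> 'w) set" where
  "Om n W = seqs n \<times> seqs n \<times> W"

definition Pn :: "real \<Rightarrow> real \<Rightarrow> nat \<Rightarrow> (bool list \<Rightarrow> 'w \<Rightarrow> real) \<Rightarrow> bool list \<times> bool list \<times> 'w \<Rightarrow> real" where
  "Pn p \<delta> n Q \<omega> = pin p \<delta> n (fst \<omega>) (fst (snd \<omega>)) * Q (fst (snd \<omega>)) (snd (snd \<omega>))"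

lemma mass_proj:
  assumes bij: "bij_betw \<psi> (K \<times> M) \<Omega>" and fin: "finite K" "finite M"
    and h: "\<And>k m. k \<in> K \<Longrightarrow> m \<in> M \<Longrightarrow> h (\<psi> (k, m)) = k" and v: "v \<in> K"
  shows "mass \<Omega> P h v = (\<Sum>m\<in>M. P (\<psi> (v, m)))"
proof -
  have "mass \<Omega> P h v = (\<Sum>x\<in>K \<times> M. if h (\<psi> x) = v then P (\<psi> x) else 0)"
    unfolding mass_def using sum.reindex_bij_betw[OF bij, of "\<lambda>\<omega>. if h \<omega> = v then P \<omega> else 0"] by simp
  also have "\<dots> = (\<Sum>(k, m)\<in>K \<times> M. if k = v then P (\<psi> (k, m)) else 0)"
    using h by (intro sum.cong refl) (clarsimp simp: h)
  also have "\<dots> = (\<Sum>k\<in>K. \<Sum>m\<in>M. if k = v then P (\<psi> (k, m)) else 0)"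
    by (simp add: sum.cartesian_product)
  also have "\<dots> = (\<Sum>k\<in>K. if k = v then (\<Sum>m\<in>M. P (\<psi> (k, m))) else 0)"
    by (intro sum.cong refl) auto
  also have "\<dots> = (\<Sum>m\<in>M. P (\<psi> (v, m)))" using v fin by (simp add: sum.delta')
  finally show ?thesis .
qed

lemma ent_marg:
  assumes pm: "pmf_on \<Omega> P" and fin: "finite \<Omega>n" and im: "\<rho> ` \<Omega> \<subseteq> \<Omega>n"
    and eq: "\<And>x. x \<in> \<Omega>n \<Longrightarrow> mass \<Omega> P \<rho> x = Pn' x"
  shows "ent \<Omega> P (\<lambda>\<omega>. f (\<rho> \<omega>)) = ent \<Omega>n Pn' f"
proof -
  have m: "mass \<Omega> P (\<lambda>\<omega>. f (\<rho> \<omega>)) v = mass \<Omega>n Pn' f v" for v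
  proof -
    have "mass \<Omega> P (\<lambda>\<omega>. f (\<rho> \<omega>)) v = (\<Sum>\<omega>\<in>\<Omega>. P \<omega> * (\<lambda>x. if f x = v then 1 else 0) (\<rho> \<omega>))"
      unfolding mass_def by (intro sum.cong) auto
    also have "\<dots> = (\<Sum>x\<in>\<Omega>n. mass \<Omega> P \<rho> x * (if f x = v then 1 else 0))"
      by (rule push[OF pm fin im])
    also have "\<dots> = (\<Sum>x\<in>\<Omega>n. Pn' x * (if f x = v then 1 else 0))" using eq by (intro sum.cong) auto
    also have "\<dots> = mass \<Omega>n Pn' f v" unfolding mass_def by (intro sum.cong) auto
    finally show ?thesis .
  qed
  have "ent \<Omega> P (\<lambda>\<omega>. f (\<rho> \<omega>)) = - (\<Sum>\<omega>\<in>\<Omega>. P \<omega> * (\<lambda>x. log 2 (mass \<Omega>n Pn' f (f x))) (\<rho> \<omega>))"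
    unfolding ent_def m by simp
  also have "\<dots> = - (\<Sum>x\<in>\<Omega>n. mass \<Omega> P \<rho> x * log 2 (mass \<Omega>n Pn' f (f x)))"
    by (subst push[OF pm fin im]) simp
  also have "\<dots> = ent \<Omega>n Pn' f" unfolding ent_def using eq by simp
  finally show ?thesis .
qed

lemma sum_Om: "(\<Sum>\<omega>\<in>Om n W. F \<omega>) = (\<Sum>z\<in>seqs n. \<Sum>y\<in>seqs n. \<Sum>w\<in>W. F (z, y, w))"
  unfolding Om_def by (simp add: sum.cartesian_product)

context chan begin

lemma sum_pi1: "(\<Sum>a\<in>UNIV. \<Sum>b\<in>UNIV. pi1 p \<delta> a b) = 1"
  unfolding pi1_def by (simp add: sum_UNIV_bool algebra_simps)

lemma pin_nonneg: "0 \<le> pin p \<delta> n zs ys"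
  unfolding pin_def using pi1_nonneg by (intro prod_nonneg) auto

lemma sum_pin: "(\<Sum>zs\<in>seqs n. \<Sum>ys\<in>seqs n. pin p \<delta> n zs ys) = 1"
  using sum_pinY[of p \<delta> n] unfolding pinY_def by (subst sum.swap) simp

lemma pmf_Om: assumes "finite W" "kern n W Q" shows "pmf_on (Om n W) (Pn p \<delta> n Q)"
proof -
  have "(\<Sum>\<omega>\<in>Om n W. Pn p \<delta> n Q \<omega>) = (\<Sum>z\<in>seqs n. \<Sum>y\<in>seqs n. pin p \<delta> n z y * (\<Sum>w\<in>W. Q y w))"
    unfolding sum_Om Pn_def by (simp add: sum_distrib_left)
  also have "\<dots> = 1" using assms(2) sum_pin[of n] unfolding kern_def by simp
  finally show ?thesis unfolding pmf_on_def Om_def Pn_def using assms pin_nonneg finite_seqs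
    by (auto simp: kern_def)
qed

end


lemma seqsS_hd_tl: "l \<in> seqs (Suc n) \<Longrightarrow> hd l # tl l = l \<and> tl l \<in> seqs n"
  unfolding seqs_def by (cases l) auto

lemma seqsS_eq: "l \<in> seqs (Suc n) \<Longrightarrow> l' \<in> seqs (Suc n) \<Longrightarrow> l = l' \<longleftrightarrow> hd l = hd l' \<and> tl l = tl l'"
  unfolding seqs_def by (cases l; cases l') auto

lemma ent_swap: "ent \<Omega> P (\<lambda>\<omega>. (f \<omega>, g \<omega>)) = ent \<Omega> P (\<lambda>\<omega>. (g \<omega>, f \<omega>))"
  by (rule ent_relabel) auto

lemma condmono: "pmf_on \<Omega> P \<Longrightarrow> ent \<Omega> P g \<le> ent \<Omega> P (\<lambda>\<omega>. (f \<omega>, g \<omega>))"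
  using ent_mono[of \<Omega> P g f] ent_swap[of \<Omega> P g f] by simp

lemma subadd: assumes pm: "pmf_on \<Omega> P"
  shows "ent \<Omega> P (\<lambda>\<omega>. (f \<omega>, g \<omega>)) \<le> ent \<Omega> P f + ent \<Omega> P g"
proof -
  have fin: "finite \<Omega>" using pm by (simp add: pmf_on_def)
  have "ent \<Omega> P (\<lambda>\<omega>. (f \<omega>, g \<omega>, ())) + ent \<Omega> P (\<lambda>\<omega>. ()) \<le>
        ent \<Omega> P (\<lambda>\<omega>. (f \<omega>, ())) + ent \<Omega> P (\<lambda>\<omega>. (g \<omega>, ()))"
    by (rule submod[OF pm finite_imageI[OF fin] finite_imageI[OF fin] finite_imageI[OF fin]]) auto
  moreover have "ent \<Omega> P (\<lambda>\<omega>. (f \<omega>, g \<omega>, ())) = ent \<Omega> P (\<lambda>\<omega>. (f \<omega>, g \<omega>))" by (rule ent_relabel) auto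
  moreover have "ent \<Omega> P (\<lambda>\<omega>. (f \<omega>, ())) = ent \<Omega> P f" by (rule ent_relabel) auto
  moreover have "ent \<Omega> P (\<lambda>\<omega>. (g \<omega>, ())) = ent \<Omega> P g" by (rule ent_relabel) auto
  ultimately show ?thesis using ent_const[OF pm, of "()"] by simp
qed

context chan begin

definition "HZW n W Q = ent (Om n W) (Pn p \<delta> n Q) (\<lambda>\<omega>. (fst \<omega>, snd (snd \<omega>))) - ent (Om n W) (Pn p \<delta> n Q) (\<lambda>\<omega>. snd (snd \<omega>))"
definition "IYW n W Q = ent (Om n W) (Pn p \<delta> n Q) (\<lambda>\<omega>. fst (snd \<omega>)) + ent (Om n W) (Pn p \<delta> n Q) (\<lambda>\<omega>. snd (snd \<omega>))
   - ent (Om n W) (Pn p \<delta> n Q) (\<lambda>\<omega>. (fst (snd \<omega>), snd (snd \<omega>)))"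

lemma GG_comb:
  assumes "0 \<le> I1" "0 \<le> I2"
  shows "real (Suc n) * GG ((I1 + I2) / real (Suc n)) \<le> real n * GG (I1 / real n) + GG I2"
proof (cases "n = 0")
  case True thus ?thesis using GG_mono[OF assms(2), of "I1 + I2"] assms by simp
next
  case False
  define l where "l = real n / real (Suc n)"
  have l: "0 \<le> l" "l \<le> 1" unfolding l_def by auto
  have l1: "1 - l = 1 / real (Suc n)" unfolding l_def by (simp add: field_simps)
  have l2: "real (Suc n) * l = real n" unfolding l_def by simp
  have "l * (I1 / real n) = I1 / real (Suc n)" unfolding l_def using False by simp
  hence "l * (I1 / real n) + (1 - l) * I2 = (I1 + I2) / real (Suc n)"
    unfolding l1 by (simp add: add_divide_distrib)
  hence "GG ((I1 + I2) / real (Suc n)) \<le> l * GG (I1 / real n) + (1 - l) * GG I2"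
    using GG_convex[of "I1 / real n" I2 l] assms l by simp
  hence "real (Suc n) * GG ((I1 + I2) / real (Suc n)) \<le> real (Suc n) * (l * GG (I1 / real n) + (1 - l) * GG I2)"
    by (intro mult_left_mono) auto
  also have "\<dots> = (real (Suc n) * l) * GG (I1 / real n) + (real (Suc n) * (1 - l)) * GG I2"
    by (simp add: distrib_left mult.assoc)
  also have "\<dots> = real n * GG (I1 / real n) + GG I2" unfolding l2 l1 by simp
  finally show ?thesis .
qed

end


lemma Om_Suc_mem: "(z, y, w) \<in> Om (Suc n) W \<longleftrightarrow> z \<in> seqs (Suc n) \<and> y \<in> seqs (Suc n) \<and> w \<in> W"
  unfolding Om_def by auto

lemma bijR: "bij_betw (\<lambda>((zr, yr, c), (a, b)). (a # zr, b # yr, c)) (Om n W \<times> (UNIV \<times> UNIV)) (Om (Suc n) W)"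
  by (rule bij_betw_byWitness[where f'="\<lambda>(z, y, c). ((tl z, tl y, c), (hd z, hd y))"])
     (auto simp: Om_def Cons_seqs seqsS_hd_tl)

lemma bijM: "bij_betw (\<lambda>((a, zr, yr, c), b). (a # zr, b # yr, c)) ((UNIV \<times> seqs n \<times> (seqs n \<times> W)) \<times> UNIV) (Om (Suc n) W)"
  by (rule bij_betw_byWitness[where f'="\<lambda>(z, y, c). ((hd z, tl z, tl y, c), hd y)"])
     (auto simp: Om_def Cons_seqs seqsS_hd_tl)

lemma bijI: "bij_betw (\<lambda>((b, yr, u), (a, zl, w)). (a # zl, b # yr, w)) ((UNIV \<times> seqs n \<times> {()}) \<times> (UNIV \<times> seqs n \<times> W)) (Om (Suc n) W)"
  by (rule bij_betw_byWitness[where f'="\<lambda>(z, y, c). ((hd y, tl y, ()), (hd z, tl z, c))"])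
     (auto simp: Om_def Cons_seqs seqsS_hd_tl)

lemma bijS: "bij_betw (\<lambda>((a, b, yr, c), zl). (a # zl, b # yr, c)) ((UNIV \<times> UNIV \<times> (seqs n \<times> W)) \<times> seqs n) (Om (Suc n) W)"
  by (rule bij_betw_byWitness[where f'="\<lambda>(z, y, c). ((hd z, hd y, tl y, c), tl z)"])
     (auto simp: Om_def Cons_seqs seqsS_hd_tl)

context chan begin

lemma kern_nonneg: "kern n W Q \<Longrightarrow> 0 \<le> Q y w" unfolding kern_def by auto
lemma kern_sum: "kern n W Q \<Longrightarrow> y \<in> seqs n \<Longrightarrow> (\<Sum>w\<in>W. Q y w) = 1" unfolding kern_def by auto

lemma pinY_nonneg: "0 \<le> pinY p \<delta> n ys" unfolding pinY_def using pin_nonneg by (intro sum_nonneg) auto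

lemma conv_n: "finite W \<Longrightarrow> kern n W Q \<Longrightarrow> real n * GG (IYW n W Q / real n) \<le> HZW n W Q"
proof (induction n arbitrary: Q)
  case 0
  thus ?case unfolding HZW_def using condmono[OF pmf_Om[OF 0]] by simp
next
  case (Suc n)
  note finW = Suc.prems(1) and kQ = Suc.prems(2)
  define \<Omega> where "\<Omega> = Om (Suc n) W"
  define P where "P = Pn p \<delta> (Suc n) Q"
  have pm: "pmf_on \<Omega> P" unfolding \<Omega>_def P_def by (rule pmf_Om[OF finW kQ])
  have P_Cons: "P (a # zr, b # yr, c) = pi1 p \<delta> a b * pin p \<delta> n zr yr * Q (b # yr) c" for a b zr yr c
    unfolding P_def Pn_def by (simp add: pin_Cons)
  have finS: "finite (seqs n)" by (rule finite_seqs)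
  have finOm: "finite (Om n W)" unfolding Om_def by (intro finite_cartesian_product finS finW)
  define Q' where "Q' ys w = (\<Sum>b\<in>UNIV. pY p \<delta> b * Q (b # ys) w)" for ys w
  have kQ': "kern n W Q'"
    unfolding kern_def
  proof (intro conjI allI ballI)
    fix y w show "0 \<le> Q' y w" unfolding Q'_def pY_def
      using kern_nonneg[OF kQ] pi1_nonneg by (intro sum_nonneg mult_nonneg_nonneg) auto
  next
    fix y assume "y \<in> seqs n"
    hence yy: "\<And>b. b # y \<in> seqs (Suc n)" by (simp add: Cons_seqs)
    have "(\<Sum>w\<in>W. Q' y w) = (\<Sum>b\<in>UNIV. pY p \<delta> b * (\<Sum>w\<in>W. Q (b # y) w))"
      unfolding Q'_def by (subst sum.swap) (simp add: sum_distrib_left)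
    also have "\<dots> = 1" using kern_sum[OF kQ yy] sum_pY[of p \<delta>] by simp
    finally show "(\<Sum>w\<in>W. Q' y w) = 1" .
  qed
  define Z0 where "Z0 \<omega> = hd (fst \<omega>)" for \<omega> :: "bool list \<times> bool list \<times> 'a"
  define Zr where "Zr \<omega> = tl (fst \<omega>)" for \<omega> :: "bool list \<times> bool list \<times> 'a"
  define Y0 where "Y0 \<omega> = hd (fst (snd \<omega>))" for \<omega> :: "bool list \<times> bool list \<times> 'a"
  define Yr where "Yr \<omega> = tl (fst (snd \<omega>))" for \<omega> :: "bool list \<times> bool list \<times> 'a"
  define Wf where "Wf \<omega> = snd (snd \<omega>)" for \<omega> :: "bool list \<times> bool list \<times> 'a"
  have inO: "\<omega> \<in> \<Omega> \<Longrightarrow> fst \<omega> \<in> seqs (Suc n) \<and> fst (snd \<omega>) \<in> seqs (Suc n) \<and> snd (snd \<omega>) \<in> W" for \<omega>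
    unfolding \<Omega>_def Om_def by (cases \<omega>) auto
  have imYr: "Yr ` \<Omega> \<subseteq> seqs n" and imZr: "Zr ` \<Omega> \<subseteq> seqs n" and imW: "Wf ` \<Omega> \<subseteq> W"
    using inO seqsS_hd_tl unfolding Yr_def Zr_def Wf_def by blast+
  \<comment> \<open>transfer to the n-letter system with kernel Q'\<close>
  define \<rho> where "\<rho> \<omega> = (Zr \<omega>, Yr \<omega>, Wf \<omega>)" for \<omega> :: "bool list \<times> bool list \<times> 'a"
  have im\<rho>: "\<rho> ` \<Omega> \<subseteq> Om n W" unfolding \<rho>_def Om_def using imYr imZr imW by auto
  have m\<rho>: "mass \<Omega> P \<rho> x = Pn p \<delta> n Q' x" if "x \<in> Om n W" for x
  proof -
    obtain zr yr c where x: "x = (zr, yr, c)" by (cases x) auto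
    have "mass \<Omega> P \<rho> x = (\<Sum>m\<in>UNIV \<times> UNIV. P ((\<lambda>((zr, yr, c), (a, b)). (a # zr, b # yr, c)) (x, m)))"
      unfolding \<Omega>_def by (rule mass_proj[OF bijR]) (auto simp: \<rho>_def Zr_def Yr_def Wf_def that finOm)
    also have "\<dots> = Pn p \<delta> n Q' x"
      unfolding x by (simp add: sum_UNIV_prod sum.cartesian_product sum_UNIV_bool P_Cons Pn_def Q'_def pY_def algebra_simps)
    finally show ?thesis .
  qed
  have T: "ent \<Omega> P (\<lambda>\<omega>. g (\<rho> \<omega>)) = ent (Om n W) (Pn p \<delta> n Q') g" for g :: "bool list \<times> bool list \<times> 'a \<Rightarrow> 'b"
    by (rule ent_marg[OF pm _ im\<rho> m\<rho>]) (rule finOm)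
  have tZW: "ent \<Omega> P (\<lambda>\<omega>. (Zr \<omega>, Wf \<omega>)) = ent (Om n W) (Pn p \<delta> n Q') (\<lambda>\<omega>. (fst \<omega>, snd (snd \<omega>)))"
    using T[of "\<lambda>\<omega>. (fst \<omega>, snd (snd \<omega>))"] by (simp add: \<rho>_def)
  have tW: "ent \<Omega> P Wf = ent (Om n W) (Pn p \<delta> n Q') (\<lambda>\<omega>. snd (snd \<omega>))"
    using T[of "\<lambda>\<omega>. snd (snd \<omega>)"] by (simp add: \<rho>_def)
  have tY: "ent \<Omega> P Yr = ent (Om n W) (Pn p \<delta> n Q') (\<lambda>\<omega>. fst (snd \<omega>))"
    using T[of "\<lambda>\<omega>. fst (snd \<omega>)"] by (simp add: \<rho>_def)
  have tYW: "ent \<Omega> P (\<lambda>\<omega>. (Yr \<omega>, Wf \<omega>)) = ent (Om n W) (Pn p \<delta> n Q') (\<lambda>\<omega>. (fst (snd \<omega>), snd (snd \<omega>)))"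
    using T[of "\<lambda>\<omega>. (fst (snd \<omega>), snd (snd \<omega>))"] by (simp add: \<rho>_def)
  have HZ': "HZW n W Q' = ent \<Omega> P (\<lambda>\<omega>. (Zr \<omega>, Wf \<omega>)) - ent \<Omega> P Wf"
    unfolding HZW_def using tZW tW by linarith
  have IY': "IYW n W Q' = ent \<Omega> P Yr + ent \<Omega> P Wf - ent \<Omega> P (\<lambda>\<omega>. (Yr \<omega>, Wf \<omega>))"
    unfolding IYW_def using tY tW tYW by linarith
  have IH: "real n * GG (IYW n W Q' / real n) \<le> HZW n W Q'" by (rule Suc.IH[OF finW kQ'])
  have imY0: "Y0 ` \<Omega> \<subseteq> UNIV" and imZ0: "Z0 ` \<Omega> \<subseteq> UNIV" by auto
  have imYW: "(\<lambda>\<omega>. (Yr \<omega>, Wf \<omega>)) ` \<Omega> \<subseteq> seqs n \<times> W" using imYr imW by auto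
  have imZW: "(\<lambda>\<omega>. (Zr \<omega>, Wf \<omega>)) ` \<Omega> \<subseteq> seqs n \<times> W" using imZr imW by auto
  have finSW: "finite (seqs n \<times> W)" using finS finW by simp
  have finB: "finite (UNIV :: bool set)" by simp
  have r1: "ent \<Omega> P (\<lambda>\<omega>. (fst \<omega>, snd (snd \<omega>))) = ent \<Omega> P (\<lambda>\<omega>. (Z0 \<omega>, Zr \<omega>, Wf \<omega>))"
    by (rule ent_relabel) (auto simp: Z0_def Zr_def Wf_def dest!: inO simp: seqsS_eq)
  have r2: "ent \<Omega> P (\<lambda>\<omega>. fst (snd \<omega>)) = ent \<Omega> P (\<lambda>\<omega>. (Y0 \<omega>, Yr \<omega>))"
    by (rule ent_relabel) (auto simp: Y0_def Yr_def dest!: inO simp: seqsS_eq)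
  have r3: "ent \<Omega> P (\<lambda>\<omega>. (fst (snd \<omega>), snd (snd \<omega>))) = ent \<Omega> P (\<lambda>\<omega>. (Y0 \<omega>, Yr \<omega>, Wf \<omega>))"
    by (rule ent_relabel) (auto simp: Y0_def Yr_def Wf_def dest!: inO simp: seqsS_eq)
  have r4: "ent \<Omega> P (\<lambda>\<omega>. snd (snd \<omega>)) = ent \<Omega> P Wf" unfolding Wf_def ..
  have r5: "ent \<Omega> P (\<lambda>\<omega>. (Z0 \<omega>, Yr \<omega>, Zr \<omega>, Wf \<omega>)) = ent \<Omega> P (\<lambda>\<omega>. (Z0 \<omega>, Zr \<omega>, Yr \<omega>, Wf \<omega>))"
    by (rule ent_relabel) auto
  have r6: "ent \<Omega> P (\<lambda>\<omega>. (Yr \<omega>, Zr \<omega>, Wf \<omega>)) = ent \<Omega> P (\<lambda>\<omega>. (Zr \<omega>, Yr \<omega>, Wf \<omega>))"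
    by (rule ent_relabel) auto
  have sm: "ent \<Omega> P (\<lambda>\<omega>. (Z0 \<omega>, Yr \<omega>, Zr \<omega>, Wf \<omega>)) + ent \<Omega> P (\<lambda>\<omega>. (Zr \<omega>, Wf \<omega>)) \<le>
            ent \<Omega> P (\<lambda>\<omega>. (Z0 \<omega>, Zr \<omega>, Wf \<omega>)) + ent \<Omega> P (\<lambda>\<omega>. (Yr \<omega>, Zr \<omega>, Wf \<omega>))"
    by (rule submod[OF pm finB finS finSW imZ0 imYr imZW])
  \<comment> \<open>Markov chain Z0 - (Yr, W) - Zr\<close>
  have mk: "ent \<Omega> P (\<lambda>\<omega>. (Z0 \<omega>, Zr \<omega>, Yr \<omega>, Wf \<omega>)) + ent \<Omega> P (\<lambda>\<omega>. (Yr \<omega>, Wf \<omega>)) =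
            ent \<Omega> P (\<lambda>\<omega>. (Z0 \<omega>, Yr \<omega>, Wf \<omega>)) + ent \<Omega> P (\<lambda>\<omega>. (Zr \<omega>, Yr \<omega>, Wf \<omega>))"
  proof (rule markov_prod[OF pm finB finS finSW imZ0 imZr imYW,
        where \<alpha>="\<lambda>a kc. \<Sum>b\<in>UNIV. pi1 p \<delta> a b * Q (b # fst kc) (snd kc)"
          and \<beta>="\<lambda>zr kc. pin p \<delta> n zr (fst kc)"])
    fix a zr kc assume "a \<in> (UNIV :: bool set)" "zr \<in> seqs n" "kc \<in> seqs n \<times> W"
    then obtain yr c where kc: "kc = (yr, c)" "yr \<in> seqs n" "c \<in> W" by auto
    have "mass \<Omega> P (\<lambda>\<omega>. (Z0 \<omega>, Zr \<omega>, Yr \<omega>, Wf \<omega>)) (a, zr, kc) =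
          (\<Sum>b\<in>UNIV. P ((\<lambda>((a, zr, yr, c), b). (a # zr, b # yr, c)) ((a, zr, kc), b)))"
      unfolding \<Omega>_def by (rule mass_proj[OF bijM]) (use \<open>zr \<in> seqs n\<close> kc in \<open>auto simp: Z0_def Zr_def Yr_def Wf_def finS finW\<close>)
    also have "\<dots> = (\<Sum>b\<in>UNIV. pi1 p \<delta> a b * Q (b # fst kc) (snd kc)) * pin p \<delta> n zr (fst kc)"
      unfolding kc by (simp add: P_Cons sum_UNIV_bool algebra_simps)
    finally show "mass \<Omega> P (\<lambda>\<omega>. (Z0 \<omega>, Zr \<omega>, Yr \<omega>, Wf \<omega>)) (a, zr, kc) =
          (\<Sum>b\<in>UNIV. pi1 p \<delta> a b * Q (b # fst kc) (snd kc)) * pin p \<delta> n zr (fst kc)" .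
  qed
  \<comment> \<open>independence of Y0 and Yr\<close>
  have ind: "ent \<Omega> P (\<lambda>\<omega>. (Y0 \<omega>, Yr \<omega>, ())) + ent \<Omega> P (\<lambda>\<omega>. ()) =
             ent \<Omega> P (\<lambda>\<omega>. (Y0 \<omega>, ())) + ent \<Omega> P (\<lambda>\<omega>. (Yr \<omega>, ()))"
  proof (rule markov_prod[OF pm finB finS finite.insertI[OF finite.emptyI] imY0 imYr,
        where \<alpha>="\<lambda>b u. pY p \<delta> b" and \<beta>="\<lambda>yr u. pinY p \<delta> n yr"])
    show "(\<lambda>\<omega>. ()) ` \<Omega> \<subseteq> {()}" by auto
    fix b yr u assume a: "b \<in> (UNIV :: bool set)" "yr \<in> seqs n" "u \<in> {()}"
    have "mass \<Omega> P (\<lambda>\<omega>. (Y0 \<omega>, Yr \<omega>, ())) (b, yr, u) =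
          (\<Sum>m\<in>UNIV \<times> seqs n \<times> W. P ((\<lambda>((b, yr, u), (a, zl, w)). (a # zl, b # yr, w)) ((b, yr, u), m)))"
      unfolding \<Omega>_def by (rule mass_proj[OF bijI]) (use a in \<open>auto simp: Y0_def Yr_def finS finW\<close>)
    also have "\<dots> = (\<Sum>a\<in>UNIV. \<Sum>zl\<in>seqs n. \<Sum>w\<in>W. pi1 p \<delta> a b * pin p \<delta> n zl yr * Q (b # yr) w)"
      by (simp only: sum.cartesian_product) (rule sum.cong[OF refl], clarsimp simp: P_Cons)
    also have "\<dots> = (\<Sum>a\<in>UNIV. \<Sum>zl\<in>seqs n. pi1 p \<delta> a b * pin p \<delta> n zl yr)"
      using kern_sum[OF kQ, of "b # yr"] a(2) by (simp add: sum_distrib_left[symmetric] Cons_seqs)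
    also have "\<dots> = pY p \<delta> b * pinY p \<delta> n yr"
      unfolding pY_def pinY_def sum_product ..
    finally show "mass \<Omega> P (\<lambda>\<omega>. (Y0 \<omega>, Yr \<omega>, ())) (b, yr, u) = pY p \<delta> b * pinY p \<delta> n yr" .
  qed
  have eY: "ent \<Omega> P (\<lambda>\<omega>. (Y0 \<omega>, Yr \<omega>)) = ent \<Omega> P Y0 + ent \<Omega> P Yr"
  proof -
    have "ent \<Omega> P (\<lambda>\<omega>. (Y0 \<omega>, Yr \<omega>, ())) = ent \<Omega> P (\<lambda>\<omega>. (Y0 \<omega>, Yr \<omega>))" by (rule ent_relabel) auto
    moreover have "ent \<Omega> P (\<lambda>\<omega>. (Y0 \<omega>, ())) = ent \<Omega> P Y0" by (rule ent_relabel) auto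
    moreover have "ent \<Omega> P (\<lambda>\<omega>. (Yr \<omega>, ())) = ent \<Omega> P Yr" by (rule ent_relabel) auto
    ultimately show ?thesis using ind ent_const[OF pm, of "()"] by simp
  qed
  have sl: "GG (ent \<Omega> P Y0 + ent \<Omega> P (\<lambda>\<omega>. (Yr \<omega>, Wf \<omega>)) - ent \<Omega> P (\<lambda>\<omega>. (Y0 \<omega>, Yr \<omega>, Wf \<omega>)))
       \<le> ent \<Omega> P (\<lambda>\<omega>. (Z0 \<omega>, Yr \<omega>, Wf \<omega>)) - ent \<Omega> P (\<lambda>\<omega>. (Yr \<omega>, Wf \<omega>))"
  proof (rule SL[OF pm finSW imYW, where \<kappa>="\<lambda>b u. pinY p \<delta> n (fst u) * Q (b # fst u) (snd u)"])
    fix b u show "0 \<le> pinY p \<delta> n (fst u) * Q (b # fst u) (snd u)"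
      using pinY_nonneg kern_nonneg[OF kQ] by (intro mult_nonneg_nonneg)
  next
    fix b
    have "(\<Sum>u\<in>seqs n \<times> W. pinY p \<delta> n (fst u) * Q (b # fst u) (snd u)) =
          (\<Sum>yr\<in>seqs n. pinY p \<delta> n yr * (\<Sum>w\<in>W. Q (b # yr) w))"
      unfolding sum_distrib_left sum.cartesian_product by (rule sum.cong[OF refl]) auto
    also have "\<dots> = (\<Sum>yr\<in>seqs n. pinY p \<delta> n yr)"
      using kern_sum[OF kQ] by (intro sum.cong) (auto simp: Cons_seqs)
    also have "\<dots> = 1" by (rule sum_pinY)
    finally show "(\<Sum>u\<in>seqs n \<times> W. pinY p \<delta> n (fst u) * Q (b # fst u) (snd u)) = 1" .
  next
    fix a b u assume u: "u \<in> seqs n \<times> W"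
    then obtain yr c where kc: "u = (yr, c)" "yr \<in> seqs n" "c \<in> W" by auto
    have "mass \<Omega> P (\<lambda>\<omega>. (Z0 \<omega>, Y0 \<omega>, Yr \<omega>, Wf \<omega>)) (a, b, u) =
          (\<Sum>zl\<in>seqs n. P ((\<lambda>((a, b, yr, c), zl). (a # zl, b # yr, c)) ((a, b, u), zl)))"
      unfolding \<Omega>_def by (rule mass_proj[OF bijS]) (use kc in \<open>auto simp: Z0_def Y0_def Yr_def Wf_def finS finW\<close>)
    also have "\<dots> = pi1 p \<delta> a b * (pinY p \<delta> n (fst u) * Q (b # fst u) (snd u))"
      unfolding kc pinY_def by (simp add: P_Cons sum_distrib_left sum_distrib_right algebra_simps)
    finally show "mass \<Omega> P (\<lambda>\<omega>. (Z0 \<omega>, Y0 \<omega>, Yr \<omega>, Wf \<omega>)) (a, b, u) =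
       pi1 p \<delta> a b * (pinY p \<delta> n (fst u) * Q (b # fst u) (snd u))" .
  qed
  have I1: "0 \<le> IYW n W Q'" unfolding IY' using subadd[OF pm, of Yr Wf] by simp
  have I2: "0 \<le> ent \<Omega> P Y0 + ent \<Omega> P (\<lambda>\<omega>. (Yr \<omega>, Wf \<omega>)) - ent \<Omega> P (\<lambda>\<omega>. (Y0 \<omega>, Yr \<omega>, Wf \<omega>))"
    using subadd[OF pm, of Y0 "\<lambda>\<omega>. (Yr \<omega>, Wf \<omega>)"] by simp
  have HS: "HZW (Suc n) W Q = ent \<Omega> P (\<lambda>\<omega>. (Z0 \<omega>, Zr \<omega>, Wf \<omega>)) - ent \<Omega> P Wf"
    unfolding HZW_def \<Omega>_def[symmetric] P_def[symmetric] r1 r4 ..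
  have IS0: "IYW (Suc n) W Q = (ent \<Omega> P Yr + ent \<Omega> P Wf - ent \<Omega> P (\<lambda>\<omega>. (Yr \<omega>, Wf \<omega>))) + (ent \<Omega> P Y0 + ent \<Omega> P (\<lambda>\<omega>. (Yr \<omega>, Wf \<omega>)) - ent \<Omega> P (\<lambda>\<omega>. (Y0 \<omega>, Yr \<omega>, Wf \<omega>)))"
    unfolding IYW_def \<Omega>_def[symmetric] P_def[symmetric] r2 r3 r4 eY by simp
  note IS = IS0[folded IY']
  have "real (Suc n) * GG (IYW (Suc n) W Q / real (Suc n)) \<le>
        real n * GG (IYW n W Q' / real n) + GG (ent \<Omega> P Y0 + ent \<Omega> P (\<lambda>\<omega>. (Yr \<omega>, Wf \<omega>)) - ent \<Omega> P (\<lambda>\<omega>. (Y0 \<omega>, Yr \<omega>, Wf \<omega>)))"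
    unfolding IS by (rule GG_comb[OF I1 I2])
  also have "\<dots> \<le> HZW n W Q' + (ent \<Omega> P (\<lambda>\<omega>. (Z0 \<omega>, Yr \<omega>, Wf \<omega>)) - ent \<Omega> P (\<lambda>\<omega>. (Yr \<omega>, Wf \<omega>)))"
    using IH sl by linarith
  also have "\<dots> \<le> HZW (Suc n) W Q"
    unfolding HS HZ' using sm mk r5 r6 by linarith
  finally show ?case .
qed

end


definition Bn :: "real \<Rightarrow> nat \<Rightarrow> bool list \<Rightarrow> bool list \<Rightarrow> real" where
  "Bn \<epsilon> n s x = (\<Prod>i<n. ber \<epsilon> (bxor (s ! i) (x ! i)))"

lemma Bn_Cons: "Bn \<epsilon> (Suc n) (a # s) (b # x) = ber \<epsilon> (bxor a b) * Bn \<epsilon> n s x"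
  unfolding Bn_def prod.lessThan_Suc_shift by simp

lemma ber_nonneg: "0 \<le> q \<Longrightarrow> q \<le> 1 \<Longrightarrow> 0 \<le> ber q b" unfolding ber_def by auto

lemma Bn_nonneg: "0 \<le> \<epsilon> \<Longrightarrow> \<epsilon> \<le> 1 \<Longrightarrow> 0 \<le> Bn \<epsilon> n s x"
  unfolding Bn_def by (intro prod_nonneg) (auto intro: ber_nonneg)

lemma sum_ber_xor: "(\<Sum>a\<in>UNIV. ber \<epsilon> (bxor a b)) = 1"
  by (cases b) (simp_all add: sum_UNIV_bool)

lemma sum_Bn: "x \<in> seqs n \<Longrightarrow> (\<Sum>s\<in>seqs n. Bn \<epsilon> n s x) = 1"
proof (induction n arbitrary: x)
  case 0 thus ?case by (simp add: seqs_0 Bn_def)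
next
  case (Suc n)
  obtain b x' where x: "x = b # x'" "x' \<in> seqs n" using Suc.prems seqs_Suc_mem by blast
  have "(\<Sum>s\<in>seqs (Suc n). Bn \<epsilon> (Suc n) s x) = (\<Sum>a\<in>UNIV. ber \<epsilon> (bxor a b) * (\<Sum>s\<in>seqs n. Bn \<epsilon> n s x'))"
    unfolding sum_seqs_Suc x(1) Bn_Cons by (simp add: sum_distrib_left)
  thus ?case using Suc.IH[OF x(2)] sum_ber_xor by simp
qed

lemma xlogx_mult: "0 \<le> a \<Longrightarrow> 0 \<le> b \<Longrightarrow> a * b * log 2 (a * b) = a * b * log 2 a + a * b * log 2 b"
  by (cases "a = 0 \<or> b = 0") (auto simp: log_mult distrib_left)

lemma ber_xlog: "(\<Sum>a\<in>UNIV. ber \<epsilon> (bxor a b) * log 2 (ber \<epsilon> (bxor a b))) = - bin_ent \<epsilon>"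
  by (cases b) (simp_all add: sum_UNIV_bool bin_ent_eq)

lemma ent_Bn: assumes "0 \<le> \<epsilon>" "\<epsilon> \<le> 1"
  shows "x \<in> seqs n \<Longrightarrow> (\<Sum>s\<in>seqs n. Bn \<epsilon> n s x * log 2 (Bn \<epsilon> n s x)) = - (real n * bin_ent \<epsilon>)"
proof (induction n arbitrary: x)
  case 0 thus ?case by (simp add: seqs_0 Bn_def)
next
  case (Suc n)
  obtain b x' where x: "x = b # x'" "x' \<in> seqs n" using Suc.prems seqs_Suc_mem by blast
  have "(\<Sum>s\<in>seqs (Suc n). Bn \<epsilon> (Suc n) s x * log 2 (Bn \<epsilon> (Suc n) s x)) =
        (\<Sum>a\<in>UNIV. \<Sum>s\<in>seqs n. ber \<epsilon> (bxor a b) * Bn \<epsilon> n s x' * log 2 (ber \<epsilon> (bxor a b))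
           + ber \<epsilon> (bxor a b) * (Bn \<epsilon> n s x' * log 2 (Bn \<epsilon> n s x')))"
    unfolding sum_seqs_Suc x(1) Bn_Cons
    using xlogx_mult[OF ber_nonneg[OF assms] Bn_nonneg[OF assms]] by (simp add: algebra_simps)
  also have "\<dots> = (\<Sum>a\<in>UNIV. ber \<epsilon> (bxor a b) * log 2 (ber \<epsilon> (bxor a b)) * (\<Sum>s\<in>seqs n. Bn \<epsilon> n s x')
           + ber \<epsilon> (bxor a b) * (\<Sum>s\<in>seqs n. Bn \<epsilon> n s x' * log 2 (Bn \<epsilon> n s x')))"
    by (simp add: sum.distrib sum_distrib_left sum_distrib_right algebra_simps)
  also have "\<dots> = - bin_ent \<epsilon> - real n * bin_ent \<epsilon>"
    using Suc.IH[OF x(2)] sum_Bn[OF x(2)] ber_xlog[of \<epsilon> b] sum_ber_xor[of \<epsilon> b]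
    by (simp add: sum.distrib sum_subtractf sum_distrib_right[symmetric])
  finally show ?case by (simp add: algebra_simps)
qed

lemma bin_ent_le1: assumes "0 \<le> \<epsilon>" "\<epsilon> \<le> 1" shows "bin_ent \<epsilon> \<le> 1"
proof -
  have pm: "pmf_on UNIV (ber \<epsilon>)" unfolding pmf_on_def using assms by (auto simp: sum_UNIV_bool ber_def)
  have "ent UNIV (ber \<epsilon>) (\<lambda>b. b) \<le> log 2 (card (UNIV :: bool set))"
    by (rule ent_le_log_card[OF pm]) auto
  moreover have "ent UNIV (ber \<epsilon>) (\<lambda>b. b) = bin_ent \<epsilon>"
    unfolding ent_def mass_def by (simp add: sum_UNIV_bool bin_ent_eq)
  ultimately show ?thesis by simp
qed


lemma pi1_nn: "0 \<le> p \<Longrightarrow> p \<le> 1 \<Longrightarrow> 0 \<le> \<delta> \<Longrightarrow> \<delta> \<le> 1 \<Longrightarrow> 0 \<le> pi1 p \<delta> a b"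
  unfolding pi1_def ber_def by auto

lemma pin_nn: "0 \<le> p \<Longrightarrow> p \<le> 1 \<Longrightarrow> 0 \<le> \<delta> \<Longrightarrow> \<delta> \<le> 1 \<Longrightarrow> 0 \<le> pin p \<delta> n z y"
  unfolding pin_def using pi1_nn by (intro prod_nonneg) auto

lemma sum_pin': "(\<Sum>zs\<in>seqs n. \<Sum>ys\<in>seqs n. pin p \<delta> n zs ys) = 1"
  using sum_pinY[of p \<delta> n] unfolding pinY_def by (subst sum.swap) simp

lemma joint_eq: "joint p \<delta> \<epsilon> n K z y x s = pin p \<delta> n z y * K y x * Bn \<epsilon> n s x"
  unfolding joint_def pin_def pi1_def Bn_def ..

definition "Om4 n = seqs n \<times> seqs n \<times> seqs n \<times> seqs n"
definition "P4 p \<delta> \<epsilon> n K \<omega> = joint p \<delta> \<epsilon> n K (fst \<omega>) (fst (snd \<omega>)) (fst (snd (snd \<omega>))) (snd (snd (snd \<omega>)))"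

lemma finite_Om4: "finite (Om4 n)" unfolding Om4_def using finite_seqs by simp

lemma sum_Om4: "(\<Sum>\<omega>\<in>Om4 n. F \<omega>) = (\<Sum>z\<in>seqs n. \<Sum>y\<in>seqs n. \<Sum>x\<in>seqs n. \<Sum>s\<in>seqs n. F (z, y, x, s))"
  unfolding Om4_def by (simp add: sum.cartesian_product)

lemma pmf4:
  assumes "0 \<le> p" "p \<le> 1" "0 \<le> \<delta>" "\<delta> \<le> 1" "0 \<le> \<epsilon>" "\<epsilon> \<le> 1" "relay_kernel n K"
  shows "pmf_on (Om4 n) (P4 p \<delta> \<epsilon> n K)"
proof -
  have K: "\<And>y x. 0 \<le> K y x" "\<And>y. y \<in> seqs n \<Longrightarrow> (\<Sum>x\<in>seqs n. K y x) = 1"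
    using assms(7) unfolding relay_kernel_def by auto
  have "(\<Sum>\<omega>\<in>Om4 n. P4 p \<delta> \<epsilon> n K \<omega>) =
        (\<Sum>z\<in>seqs n. \<Sum>y\<in>seqs n. pin p \<delta> n z y * (\<Sum>x\<in>seqs n. K y x * (\<Sum>s\<in>seqs n. Bn \<epsilon> n s x)))"
    unfolding sum_Om4 P4_def joint_eq by (simp add: sum_distrib_left mult.assoc)
  also have "\<dots> = 1" using sum_Bn K(2) sum_pin' by simp
  finally show ?thesis unfolding pmf_on_def using finite_Om4 assms K(1) pin_nn Bn_nonneg
    by (auto simp: P4_def joint_eq intro!: mult_nonneg_nonneg)
qed

lemma bij4: "bij_betw (\<lambda>((z, y, s), x). (z, y, x, s)) (Om n (seqs n) \<times> seqs n) (Om4 n)"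
  by (rule bij_betw_byWitness[where f'="\<lambda>(z, y, x, s). ((z, y, s), x)"]) (auto simp: Om_def Om4_def)

lemma bijZS: "bij_betw (\<lambda>((z, s), (y, x)). (z, y, x, s)) ((seqs n \<times> seqs n) \<times> (seqs n \<times> seqs n)) (Om4 n)"
  by (rule bij_betw_byWitness[where f'="\<lambda>(z, y, x, s). ((z, s), (y, x))"]) (auto simp: Om4_def)

lemma bijSXY: "bij_betw (\<lambda>((s, x, y), z). (z, y, x, s)) ((seqs n \<times> seqs n \<times> seqs n) \<times> seqs n) (Om4 n)"
  by (rule bij_betw_byWitness[where f'="\<lambda>(z, y, x, s). ((s, x, y), z)"]) (auto simp: Om4_def)

lemma H_Zn_Sn_ent:
  assumes a: "0 \<le> p" "p \<le> 1" "0 \<le> \<delta>" "\<delta> \<le> 1" "0 \<le> \<epsilon>" "\<epsilon> \<le> 1" "relay_kernel n K"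
  shows "H_Zn_Sn p \<delta> \<epsilon> n K = ent (Om4 n) (P4 p \<delta> \<epsilon> n K) (\<lambda>\<omega>. (fst \<omega>, snd (snd (snd \<omega>))))
           - ent (Om4 n) (P4 p \<delta> \<epsilon> n K) (\<lambda>\<omega>. snd (snd (snd \<omega>)))"
proof -
  define \<Omega> where "\<Omega> = Om4 n"
  define P where "P = P4 p \<delta> \<epsilon> n K"
  have pm: "pmf_on \<Omega> P" unfolding \<Omega>_def P_def by (rule pmf4[OF a])
  have finS: "finite (seqs n)" by (rule finite_seqs)
  have imZ: "(\<lambda>\<omega>. fst \<omega>) ` \<Omega> \<subseteq> seqs n" and imS: "(\<lambda>\<omega>. snd (snd (snd \<omega>))) ` \<Omega> \<subseteq> seqs n"
    unfolding \<Omega>_def Om4_def by auto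
  have mZS: "mass \<Omega> P (\<lambda>\<omega>. (fst \<omega>, snd (snd (snd \<omega>)))) (z, s) = pZS p \<delta> \<epsilon> n K z s"
    if "z \<in> seqs n" "s \<in> seqs n" for z s
  proof -
    have "mass \<Omega> P (\<lambda>\<omega>. (fst \<omega>, snd (snd (snd \<omega>)))) (z, s) =
          (\<Sum>m\<in>seqs n \<times> seqs n. P ((\<lambda>((z, s), (y, x)). (z, y, x, s)) ((z, s), m)))"
      unfolding \<Omega>_def by (rule mass_proj[OF bijZS]) (use that finS in auto)
    also have "\<dots> = pZS p \<delta> \<epsilon> n K z s"
      unfolding pZS_def sum.cartesian_product by (rule sum.cong[OF refl]) (clarsimp simp: P_def P4_def)
    finally show ?thesis .
  qed
  have mS: "mass \<Omega> P (\<lambda>\<omega>. snd (snd (snd \<omega>))) s = pS p \<delta> \<epsilon> n K s" if "s \<in> seqs n" for s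
  proof -
    have "mass \<Omega> P (\<lambda>\<omega>. snd (snd (snd \<omega>))) s = (\<Sum>z\<in>seqs n. mass \<Omega> P (\<lambda>\<omega>. (fst \<omega>, snd (snd (snd \<omega>)))) (z, s))"
      by (rule mass_marg_fst[OF pm finS imZ])
    also have "\<dots> = pS p \<delta> \<epsilon> n K s" unfolding pS_def using mZS that by (intro sum.cong) auto
    finally show ?thesis .
  qed
  have pZS0: "0 \<le> pZS p \<delta> \<epsilon> n K z s" for z s
    unfolding pZS_def joint_eq using a pin_nn Bn_nonneg a(7)[unfolded relay_kernel_def]
    by (intro sum_nonneg mult_nonneg_nonneg) auto
  have pZSle: "pZS p \<delta> \<epsilon> n K z s \<le> pS p \<delta> \<epsilon> n K s" if "z \<in> seqs n" for z s
    unfolding pS_def using pZS0 that finS by (intro member_le_sum) auto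
  have eZS: "ent \<Omega> P (\<lambda>\<omega>. (fst \<omega>, snd (snd (snd \<omega>)))) = - (\<Sum>z\<in>seqs n. \<Sum>s\<in>seqs n. pZS p \<delta> \<epsilon> n K z s * log 2 (pZS p \<delta> \<epsilon> n K z s))"
  proof -
    have "ent \<Omega> P (\<lambda>\<omega>. (fst \<omega>, snd (snd (snd \<omega>)))) = - (\<Sum>v\<in>seqs n \<times> seqs n. mass \<Omega> P (\<lambda>\<omega>. (fst \<omega>, snd (snd (snd \<omega>)))) v * log 2 (mass \<Omega> P (\<lambda>\<omega>. (fst \<omega>, snd (snd (snd \<omega>)))) v))"
      using imZ imS by (intro ent_push[OF pm]) (auto simp: finS)
    also have "\<dots> = - (\<Sum>z\<in>seqs n. \<Sum>s\<in>seqs n. pZS p \<delta> \<epsilon> n K z s * log 2 (pZS p \<delta> \<epsilon> n K z s))"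
      unfolding sum.cartesian_product by (intro arg_cong[where f=uminus] sum.cong refl) (clarsimp simp: mZS)
    finally show ?thesis .
  qed
  have eS: "ent \<Omega> P (\<lambda>\<omega>. snd (snd (snd \<omega>))) = - (\<Sum>s\<in>seqs n. pS p \<delta> \<epsilon> n K s * log 2 (pS p \<delta> \<epsilon> n K s))"
    unfolding ent_push[OF pm finS imS] by (intro arg_cong[where f=uminus] sum.cong refl) (simp add: mS)
  have "H_Zn_Sn p \<delta> \<epsilon> n K = - (\<Sum>z\<in>seqs n. \<Sum>s\<in>seqs n. pZS p \<delta> \<epsilon> n K z s * log 2 (pZS p \<delta> \<epsilon> n K z s)
          - pZS p \<delta> \<epsilon> n K z s * log 2 (pS p \<delta> \<epsilon> n K s))"
    unfolding H_Zn_Sn_def xlogxy_eq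
    by (intro arg_cong[where f=uminus] sum.cong refl xlog_split2 pZS0) (meson less_le_trans pZSle)
  also have "\<dots> = - (\<Sum>z\<in>seqs n. \<Sum>s\<in>seqs n. pZS p \<delta> \<epsilon> n K z s * log 2 (pZS p \<delta> \<epsilon> n K z s))
      + (\<Sum>s\<in>seqs n. (\<Sum>z\<in>seqs n. pZS p \<delta> \<epsilon> n K z s) * log 2 (pS p \<delta> \<epsilon> n K s))"
  proof -
    have "(\<Sum>z\<in>seqs n. \<Sum>s\<in>seqs n. pZS p \<delta> \<epsilon> n K z s * log 2 (pS p \<delta> \<epsilon> n K s)) =
          (\<Sum>s\<in>seqs n. \<Sum>z\<in>seqs n. pZS p \<delta> \<epsilon> n K z s * log 2 (pS p \<delta> \<epsilon> n K s))"
      by (rule sum.swap)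
    thus ?thesis by (simp add: sum_subtractf sum_distrib_right)
  qed
  finally show ?thesis unfolding eZS[unfolded \<Omega>_def P_def] eS[unfolded \<Omega>_def P_def] pS_def[symmetric] by simp
qed


lemma capacity:
  assumes a: "0 \<le> p" "p \<le> 1" "0 \<le> \<delta>" "\<delta> \<le> 1" "0 \<le> \<epsilon>" "\<epsilon> \<le> 1" "relay_kernel n K"
  shows "ent (Om4 n) (P4 p \<delta> \<epsilon> n K) (\<lambda>\<omega>. fst (snd \<omega>)) + ent (Om4 n) (P4 p \<delta> \<epsilon> n K) (\<lambda>\<omega>. snd (snd (snd \<omega>)))
         - ent (Om4 n) (P4 p \<delta> \<epsilon> n K) (\<lambda>\<omega>. (fst (snd \<omega>), snd (snd (snd \<omega>)))) \<le> real n * (1 - bin_ent \<epsilon>)"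
proof -
  define \<Omega> where "\<Omega> = Om4 n"
  define P where "P = P4 p \<delta> \<epsilon> n K"
  define Y4 where "Y4 \<omega> = fst (snd \<omega>)" for \<omega> :: "bool list \<times> bool list \<times> bool list \<times> bool list"
  define X4 where "X4 \<omega> = fst (snd (snd \<omega>))" for \<omega> :: "bool list \<times> bool list \<times> bool list \<times> bool list"
  define S4 where "S4 \<omega> = snd (snd (snd \<omega>))" for \<omega> :: "bool list \<times> bool list \<times> bool list \<times> bool list"
  have pm: "pmf_on \<Omega> P" unfolding \<Omega>_def P_def by (rule pmf4[OF a])
  have finS: "finite (seqs n)" by (rule finite_seqs)
  have imY: "Y4 ` \<Omega> \<subseteq> seqs n" and imX: "X4 ` \<Omega> \<subseteq> seqs n" and imS: "S4 ` \<Omega> \<subseteq> seqs n"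
    unfolding \<Omega>_def Om4_def Y4_def X4_def S4_def by auto
  have imXY: "(\<lambda>\<omega>. (X4 \<omega>, Y4 \<omega>)) ` \<Omega> \<subseteq> seqs n \<times> seqs n" using imX imY by auto
  have imSXY: "(\<lambda>\<omega>. (S4 \<omega>, X4 \<omega>, Y4 \<omega>)) ` \<Omega> \<subseteq> seqs n \<times> seqs n \<times> seqs n" using imS imX imY by auto
  have K: "\<And>y x. 0 \<le> K y x" "\<And>y. y \<in> seqs n \<Longrightarrow> (\<Sum>x\<in>seqs n. K y x) = 1"
    using a(7) unfolding relay_kernel_def by auto
  define c where "c x y = pinY p \<delta> n y * K y x" for x y
  have c0: "0 \<le> c x y" for x y unfolding c_def pinY_def using pin_nn[OF a(1-4)] K(1)
    by (intro mult_nonneg_nonneg sum_nonneg) auto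
  have mSXY: "mass \<Omega> P (\<lambda>\<omega>. (S4 \<omega>, X4 \<omega>, Y4 \<omega>)) (s, x, y) = c x y * Bn \<epsilon> n s x"
    if "s \<in> seqs n" "x \<in> seqs n" "y \<in> seqs n" for s x y
  proof -
    have "mass \<Omega> P (\<lambda>\<omega>. (S4 \<omega>, X4 \<omega>, Y4 \<omega>)) (s, x, y) =
          (\<Sum>z\<in>seqs n. P ((\<lambda>((s, x, y), z). (z, y, x, s)) ((s, x, y), z)))"
      unfolding \<Omega>_def by (rule mass_proj[OF bijSXY]) (use that finS in \<open>auto simp: S4_def X4_def Y4_def\<close>)
    also have "\<dots> = c x y * Bn \<epsilon> n s x"
      unfolding c_def pinY_def P_def P4_def joint_eq by (simp add: sum_distrib_right)
    finally show ?thesis .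
  qed
  have mXY: "mass \<Omega> P (\<lambda>\<omega>. (X4 \<omega>, Y4 \<omega>)) (x, y) = c x y" if "x \<in> seqs n" "y \<in> seqs n" for x y
  proof -
    have "mass \<Omega> P (\<lambda>\<omega>. (X4 \<omega>, Y4 \<omega>)) (x, y) = (\<Sum>s\<in>seqs n. mass \<Omega> P (\<lambda>\<omega>. (S4 \<omega>, X4 \<omega>, Y4 \<omega>)) (s, x, y))"
      by (rule mass_marg_fst[OF pm finS imS])
    also have "\<dots> = (\<Sum>s\<in>seqs n. c x y * Bn \<epsilon> n s x)" using mSXY that by (intro sum.cong) auto
    also have "\<dots> = c x y" using sum_Bn[OF that(1)] by (simp add: sum_distrib_left[symmetric])
    finally show ?thesis .
  qed
  have sc: "(\<Sum>x\<in>seqs n. \<Sum>y\<in>seqs n. c x y) = 1"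
  proof -
    have "(\<Sum>v\<in>seqs n \<times> seqs n. mass \<Omega> P (\<lambda>\<omega>. (X4 \<omega>, Y4 \<omega>)) v) = 1"
      by (rule mass_sum[OF pm _ imXY]) (simp add: finS)
    moreover have "(\<Sum>x\<in>seqs n. \<Sum>y\<in>seqs n. c x y) = (\<Sum>v\<in>seqs n \<times> seqs n. mass \<Omega> P (\<lambda>\<omega>. (X4 \<omega>, Y4 \<omega>)) v)"
      unfolding sum.cartesian_product by (rule sum.cong[OF refl]) (clarsimp simp: mXY)
    ultimately show ?thesis by simp
  qed
  have eXY: "ent \<Omega> P (\<lambda>\<omega>. (X4 \<omega>, Y4 \<omega>)) = - (\<Sum>x\<in>seqs n. \<Sum>y\<in>seqs n. c x y * log 2 (c x y))"
  proof -
    have "ent \<Omega> P (\<lambda>\<omega>. (X4 \<omega>, Y4 \<omega>)) = - (\<Sum>v\<in>seqs n \<times> seqs n. mass \<Omega> P (\<lambda>\<omega>. (X4 \<omega>, Y4 \<omega>)) v * log 2 (mass \<Omega> P (\<lambda>\<omega>. (X4 \<omega>, Y4 \<omega>)) v))"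
      by (rule ent_push[OF pm _ imXY]) (simp add: finS)
    also have "\<dots> = - (\<Sum>x\<in>seqs n. \<Sum>y\<in>seqs n. c x y * log 2 (c x y))"
      unfolding sum.cartesian_product by (intro arg_cong[where f=uminus] sum.cong refl) (clarsimp simp: mXY)
    finally show ?thesis .
  qed
  have eSXY: "ent \<Omega> P (\<lambda>\<omega>. (S4 \<omega>, X4 \<omega>, Y4 \<omega>)) = - (\<Sum>s\<in>seqs n. \<Sum>x\<in>seqs n. \<Sum>y\<in>seqs n. (c x y * Bn \<epsilon> n s x) * log 2 (c x y * Bn \<epsilon> n s x))"
  proof -
    have "ent \<Omega> P (\<lambda>\<omega>. (S4 \<omega>, X4 \<omega>, Y4 \<omega>)) = - (\<Sum>v\<in>seqs n \<times> seqs n \<times> seqs n. mass \<Omega> P (\<lambda>\<omega>. (S4 \<omega>, X4 \<omega>, Y4 \<omega>)) v * log 2 (mass \<Omega> P (\<lambda>\<omega>. (S4 \<omega>, X4 \<omega>, Y4 \<omega>)) v))"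
      by (rule ent_push[OF pm _ imSXY]) (simp add: finS)
    also have "\<dots> = - (\<Sum>s\<in>seqs n. \<Sum>x\<in>seqs n. \<Sum>y\<in>seqs n. (c x y * Bn \<epsilon> n s x) * log 2 (c x y * Bn \<epsilon> n s x))"
      unfolding sum.cartesian_product by (intro arg_cong[where f=uminus] sum.cong refl) (clarsimp simp: mSXY)
    finally show ?thesis .
  qed
  have key: "ent \<Omega> P (\<lambda>\<omega>. (S4 \<omega>, X4 \<omega>, Y4 \<omega>)) = ent \<Omega> P (\<lambda>\<omega>. (X4 \<omega>, Y4 \<omega>)) + real n * bin_ent \<epsilon>"
  proof -
    have "(\<Sum>s\<in>seqs n. \<Sum>x\<in>seqs n. \<Sum>y\<in>seqs n. (c x y * Bn \<epsilon> n s x) * log 2 (c x y * Bn \<epsilon> n s x))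
        = (\<Sum>x\<in>seqs n. \<Sum>s\<in>seqs n. \<Sum>y\<in>seqs n. (c x y * Bn \<epsilon> n s x) * log 2 (c x y * Bn \<epsilon> n s x))"
      by (rule sum.swap)
    also have "\<dots> = (\<Sum>x\<in>seqs n. \<Sum>y\<in>seqs n. \<Sum>s\<in>seqs n. (c x y * Bn \<epsilon> n s x) * log 2 (c x y * Bn \<epsilon> n s x))"
      by (intro sum.cong refl sum.swap)
    also have "\<dots> = (\<Sum>x\<in>seqs n. \<Sum>y\<in>seqs n. c x y * log 2 (c x y) * (\<Sum>s\<in>seqs n. Bn \<epsilon> n s x)
                   + c x y * (\<Sum>s\<in>seqs n. Bn \<epsilon> n s x * log 2 (Bn \<epsilon> n s x)))"
      using xlogx_mult[OF c0 Bn_nonneg[OF a(5,6)]]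
      by (simp add: sum.distrib sum_distrib_left sum_distrib_right algebra_simps)
    also have "\<dots> = (\<Sum>x\<in>seqs n. \<Sum>y\<in>seqs n. c x y * log 2 (c x y) - c x y * (real n * bin_ent \<epsilon>))"
      using sum_Bn ent_Bn[OF a(5,6)] by (intro sum.cong refl) auto
    also have "\<dots> = (\<Sum>x\<in>seqs n. \<Sum>y\<in>seqs n. c x y * log 2 (c x y)) - real n * bin_ent \<epsilon>"
      using sc by (simp add: sum_subtractf sum_distrib_right[symmetric])
    finally show ?thesis unfolding eSXY eXY by simp
  qed
  have sm: "ent \<Omega> P (\<lambda>\<omega>. (S4 \<omega>, X4 \<omega>, Y4 \<omega>)) + ent \<Omega> P Y4 \<le> ent \<Omega> P (\<lambda>\<omega>. (S4 \<omega>, Y4 \<omega>)) + ent \<Omega> P (\<lambda>\<omega>. (X4 \<omega>, Y4 \<omega>))"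
    by (rule submod[OF pm finS finS finS imS imX imY])
  have eS: "ent \<Omega> P S4 \<le> real n"
  proof -
    have "ent \<Omega> P S4 \<le> log 2 (card (seqs n))"
      by (rule ent_le_log_card[OF pm finS imS]) (auto simp: seqs_def intro: exI[of _ "replicate n False"])
    thus ?thesis by (simp add: card_seqs log_nat_power)
  qed
  have sw: "ent \<Omega> P (\<lambda>\<omega>. (Y4 \<omega>, S4 \<omega>)) = ent \<Omega> P (\<lambda>\<omega>. (S4 \<omega>, Y4 \<omega>))" by (rule ent_swap)
  have "ent \<Omega> P Y4 + ent \<Omega> P S4 - ent \<Omega> P (\<lambda>\<omega>. (Y4 \<omega>, S4 \<omega>)) \<le> real n * (1 - bin_ent \<epsilon>)"
    using sm key eS sw by (simp add: algebra_simps)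
  thus ?thesis unfolding \<Omega>_def P_def Y4_def S4_def .
qed


lemma bij4': "bij_betw (\<lambda>((z, y, s), x). (z, y, x, s)) (Om n (seqs n) \<times> seqs n) (Om4 n)"
  by (rule bij4)

lemma H_Zn_Sn_nonneg:
  assumes a: "0 \<le> p" "p \<le> 1" "0 \<le> \<delta>" "\<delta> \<le> 1" "0 \<le> \<epsilon>" "\<epsilon> \<le> 1" "relay_kernel n K"
  shows "0 \<le> H_Zn_Sn p \<delta> \<epsilon> n K"
  unfolding H_Zn_Sn_ent[OF a] using condmono[OF pmf4[OF a]] by simp

context chan begin

lemma main_conv:
  assumes e: "0 \<le> \<epsilon>" "\<epsilon> \<le> 1" and rk: "relay_kernel n K"
  shows "real n * GG (1 - bin_ent \<epsilon>) \<le> H_Zn_Sn p \<delta> \<epsilon> n K"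
proof -
  have a: "0 \<le> p" "p \<le> 1" "0 \<le> \<delta>" "\<delta> \<le> 1" "0 \<le> \<epsilon>" "\<epsilon> \<le> 1" "relay_kernel n K"
    using p0 p1 d0 d1 e rk by auto
  have K: "\<And>y x. 0 \<le> K y x" "\<And>y. y \<in> seqs n \<Longrightarrow> (\<Sum>x\<in>seqs n. K y x) = 1"
    using rk unfolding relay_kernel_def by auto
  define Qs where "Qs y s = (\<Sum>x\<in>seqs n. K y x * Bn \<epsilon> n s x)" for y s
  have finS: "finite (seqs n)" by (rule finite_seqs)
  have kQ: "kern n (seqs n) Qs" unfolding kern_def
  proof (intro conjI allI ballI)
    fix y s show "0 \<le> Qs y s" unfolding Qs_def using K(1) Bn_nonneg[OF e]
      by (intro sum_nonneg mult_nonneg_nonneg) auto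
  next
    fix y assume y: "y \<in> seqs n"
    have "(\<Sum>s\<in>seqs n. Qs y s) = (\<Sum>x\<in>seqs n. K y x * (\<Sum>s\<in>seqs n. Bn \<epsilon> n s x))"
      unfolding Qs_def by (subst sum.swap) (simp add: sum_distrib_left)
    also have "\<dots> = 1" using sum_Bn K(2)[OF y] by simp
    finally show "(\<Sum>s\<in>seqs n. Qs y s) = 1" .
  qed
  define \<rho> where "\<rho> \<omega> = (fst \<omega>, fst (snd \<omega>), snd (snd (snd \<omega>)))" for \<omega> :: "bool list \<times> bool list \<times> bool list \<times> bool list"
  have pm4: "pmf_on (Om4 n) (P4 p \<delta> \<epsilon> n K)" by (rule pmf4[OF a])
  have finOm: "finite (Om n (seqs n))" unfolding Om_def using finS by simp
  have im: "\<rho> ` Om4 n \<subseteq> Om n (seqs n)" unfolding \<rho>_def Om_def Om4_def by auto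
  have m\<rho>: "mass (Om4 n) (P4 p \<delta> \<epsilon> n K) \<rho> v = Pn p \<delta> n Qs v" if "v \<in> Om n (seqs n)" for v
  proof -
    obtain z y s where v: "v = (z, y, s)" by (cases v) auto
    have "mass (Om4 n) (P4 p \<delta> \<epsilon> n K) \<rho> v = (\<Sum>x\<in>seqs n. P4 p \<delta> \<epsilon> n K ((\<lambda>((z, y, s), x). (z, y, x, s)) (v, x)))"
      by (rule mass_proj[OF bij4]) (use that finOm finS in \<open>auto simp: \<rho>_def\<close>)
    also have "\<dots> = Pn p \<delta> n Qs v"
      unfolding v P4_def Pn_def Qs_def joint_eq by (simp add: sum_distrib_left mult.assoc)
    finally show ?thesis .
  qed
  have T: "ent (Om4 n) (P4 p \<delta> \<epsilon> n K) (\<lambda>\<omega>. g (\<rho> \<omega>)) = ent (Om n (seqs n)) (Pn p \<delta> n Qs) g"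
    for g :: "bool list \<times> bool list \<times> bool list \<Rightarrow> 'b"
    by (rule ent_marg[OF pm4 finOm im m\<rho>])
  have tZS: "ent (Om4 n) (P4 p \<delta> \<epsilon> n K) (\<lambda>\<omega>. (fst \<omega>, snd (snd (snd \<omega>)))) = ent (Om n (seqs n)) (Pn p \<delta> n Qs) (\<lambda>\<omega>. (fst \<omega>, snd (snd \<omega>)))"
    using T[of "\<lambda>\<omega>. (fst \<omega>, snd (snd \<omega>))"] by (simp add: \<rho>_def)
  have tS: "ent (Om4 n) (P4 p \<delta> \<epsilon> n K) (\<lambda>\<omega>. snd (snd (snd \<omega>))) = ent (Om n (seqs n)) (Pn p \<delta> n Qs) (\<lambda>\<omega>. snd (snd \<omega>))"
    using T[of "\<lambda>\<omega>. snd (snd \<omega>)"] by (simp add: \<rho>_def)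
  have tY: "ent (Om4 n) (P4 p \<delta> \<epsilon> n K) (\<lambda>\<omega>. fst (snd \<omega>)) = ent (Om n (seqs n)) (Pn p \<delta> n Qs) (\<lambda>\<omega>. fst (snd \<omega>))"
    using T[of "\<lambda>\<omega>. fst (snd \<omega>)"] by (simp add: \<rho>_def)
  have tYS: "ent (Om4 n) (P4 p \<delta> \<epsilon> n K) (\<lambda>\<omega>. (fst (snd \<omega>), snd (snd (snd \<omega>)))) = ent (Om n (seqs n)) (Pn p \<delta> n Qs) (\<lambda>\<omega>. (fst (snd \<omega>), snd (snd \<omega>)))"
    using T[of "\<lambda>\<omega>. (fst (snd \<omega>), snd (snd \<omega>))"] by (simp add: \<rho>_def)
  have HZ: "HZW n (seqs n) Qs = H_Zn_Sn p \<delta> \<epsilon> n K"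
    unfolding HZW_def H_Zn_Sn_ent[OF a] using tZS tS by linarith
  have IY: "IYW n (seqs n) Qs \<le> real n * (1 - bin_ent \<epsilon>)"
    unfolding IYW_def using capacity[OF a] tY tS tYS by linarith
  have IY0: "0 \<le> IYW n (seqs n) Qs"
    unfolding IYW_def using subadd[OF pmf_Om[OF finS kQ], of "\<lambda>\<omega>. fst (snd \<omega>)" "\<lambda>\<omega>. snd (snd \<omega>)"] by simp
  have cv: "real n * GG (IYW n (seqs n) Qs / real n) \<le> HZW n (seqs n) Qs" by (rule conv_n[OF finS kQ])
  show ?thesis
  proof (cases "n = 0")
    case True thus ?thesis using cv HZ by simp
  next
    case False
    have r0: "0 \<le> 1 - bin_ent \<epsilon>" using bin_ent_le1[OF e] by simp
    have "IYW n (seqs n) Qs / real n \<le> 1 - bin_ent \<epsilon>" using IY False by (simp add: divide_le_eq mult.commute)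
    hence "GG (1 - bin_ent \<epsilon>) \<le> GG (IYW n (seqs n) Qs / real n)"
      using IY0 by (intro GG_mono) auto
    hence "real n * GG (1 - bin_ent \<epsilon>) \<le> real n * GG (IYW n (seqs n) Qs / real n)"
      by (intro mult_left_mono) auto
    thus ?thesis using cv HZ by simp
  qed
qed

end


lemma degenerate:
  assumes p: "p = 0 \<or> p = 1" and d: "0 \<le> \<delta>" "\<delta> \<le> 1"
  shows "H_ZU p \<delta> m q = 0"
proof -
  have pZU_sum: "pU p \<delta> q u = pZU p \<delta> q True u + pZU p \<delta> q False u" for u
    unfolding pU_def pZU_def by (simp add: sum_UNIV_bool)
  have z: "pZU p \<delta> q (p = 0) u = 0" for u
    using p unfolding pZU_def pZYU_def by auto
  have "xlogxy (pZU p \<delta> q b u) (pU p \<delta> q u) = 0" for b u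
  proof (cases "b = (p = 0)")
    case True thus ?thesis using z by (simp add: xlogxy_def)
  next
    case False
    hence "pU p \<delta> q u = pZU p \<delta> q b u" using z[of u] pZU_sum[of u] by (cases b) auto
    thus ?thesis by (simp add: xlogxy_def)
  qed
  thus ?thesis unfolding H_ZU_def by simp
qed

theorem lemma1:
  fixes p \<delta> \<epsilon> :: real and n :: nat and K :: "bool list \<Rightarrow> bool list \<Rightarrow> real"
  assumes "0 \<le> p" "p \<le> 1" "0 \<le> \<delta>" "\<delta> \<le> 1" "0 \<le> \<epsilon>" "\<epsilon> \<le> 1"
    and "relay_kernel n K"
  shows "\<exists>m q. m \<le> 4 \<and> test_channel m q \<and> I_UY p \<delta> m q \<le> 1 - bin_ent \<epsilon>
           \<and> (\<forall>m' q'. test_channel m' q' \<and> I_UY p \<delta> m' q' \<le> 1 - bin_ent \<epsilon>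
                 \<longrightarrow> H_ZU p \<delta> m q \<le> H_ZU p \<delta> m' q')
           \<and> H_Zn_Sn p \<delta> \<epsilon> n K \<ge> real n * H_ZU p \<delta> m q"
proof (cases "0 < p \<and> p < 1")
  case True
  interpret chan p \<delta> using True assms by unfold_locales auto
  have r0: "0 \<le> 1 - bin_ent \<epsilon>" using bin_ent_le1[OF assms(5,6)] by simp
  obtain m q where mq: "m \<le> 4" "test_channel m q" "I_UY p \<delta> m q \<le> 1 - bin_ent \<epsilon>" "H_ZU p \<delta> m q = GG (1 - bin_ent \<epsilon>)"
    using construct[OF r0] by blast
  show ?thesis
  proof (intro exI conjI allI impI)
    show "m \<le> 4" "test_channel m q" "I_UY p \<delta> m q \<le> 1 - bin_ent \<epsilon>" using mq by auto
    fix m' q' assume "test_channel m' q' \<and> I_UY p \<delta> m' q' \<le> 1 - bin_ent \<epsilon>"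
    thus "H_ZU p \<delta> m q \<le> H_ZU p \<delta> m' q'" unfolding mq(4) using GG_le_H by blast
  next
    show "real n * H_ZU p \<delta> m q \<le> H_Zn_Sn p \<delta> \<epsilon> n K"
      unfolding mq(4) by (rule main_conv[OF assms(5,6,7)])
  qed
next
  case False
  hence p: "p = 0 \<or> p = 1" using assms(1,2) by auto
  define q where "q y u = (1::real)" for y :: bool and u :: nat
  have tc: "test_channel 1 q" unfolding test_channel_def q_def by simp
  have pU1: "pU p \<delta> q 0 = 1"
    unfolding pU_def pZYU_def q_def using p by (auto simp: sum_UNIV_bool)
  have "I_UY p \<delta> 1 q = 0"
  proof -
    have "pYU p \<delta> q y 0 = pY1 p \<delta> y" for y unfolding pYU_def pY1_def pZYU_def q_def by simp
    thus ?thesis unfolding I_UY_def by (auto simp: xlogxy_def pU1 intro!: sum.neutral)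
  qed
  hence I: "I_UY p \<delta> 1 q \<le> 1 - bin_ent \<epsilon>" using bin_ent_le1[OF assms(5,6)] by simp
  show ?thesis
  proof (intro exI conjI allI impI)
    show "(1::nat) \<le> 4" "test_channel 1 q" "I_UY p \<delta> 1 q \<le> 1 - bin_ent \<epsilon>" using tc I by auto
    fix m' q'
    show "H_ZU p \<delta> 1 q \<le> H_ZU p \<delta> m' q'" using degenerate[OF p assms(3,4)] by simp
  next
    show "real n * H_ZU p \<delta> 1 q \<le> H_Zn_Sn p \<delta> \<epsilon> n K"
      using degenerate[OF p assms(3,4)] H_Zn_Sn_nonneg[OF assms] by simp
  qed
qed


end
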